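(* Let $\Gamma$ be a finite simplicial graph without isolated vertices, and let $v_1,v_2$ be distinct vertices of $\Gamma$ with $d(v_1,v_2)\ge3$ (distance $\infty$ if in different components). If $f\in\mathrm{Aut}(A_\Gamma)$ satisfies $v_1\in\mathrm{esupp}(f(v_1))$, then $v_2\notin\mathrm{esupp}(f(v_1))$.
   Context: $A_\Gamma$ is the right-angled Artin group with generators $V\Gamma$ and relations $[a,b]=1$ for edges. For $g\in A_\Gamma$, $\mathrm{esupp}(g)$ is the set of generators appearing in a word of minimal length among all words representing conjugates of $g$. *)

theory Defs
  imports "HOL-Algebra.Group"
begin

text \<open>Simplicial graph: finite vertex set V, symmetric irreflexive edge relation E on V.
Words: lists of letters (v, s), meaning v if s = True and v^-1 if s = False.\<close>

definition simple_graph :: "'v set \<Rightarrow> ('v \<Rightarrow> 'v \<Rightarrow> bool) \<Rightarrow> bool" where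
  "simple_graph V E \<longleftrightarrow> finite V \<and> (\<forall>a b. E a b \<longrightarrow> a \<in> V \<and> b \<in> V)
     \<and> (\<forall>a b. E a b \<longrightarrow> E b a) \<and> (\<forall>a. \<not> E a a)"

definition no_isolated :: "'v set \<Rightarrow> ('v \<Rightarrow> 'v \<Rightarrow> bool) \<Rightarrow> bool" where
  "no_isolated V E \<longleftrightarrow> (\<forall>v\<in>V. \<exists>u. E v u)"

text \<open>d(v1,v2) \<ge> 3 (with d = \<infinity> across components): no path of length \<le> 2.\<close>
definition dist_ge_3 :: "('v \<Rightarrow> 'v \<Rightarrow> bool) \<Rightarrow> 'v \<Rightarrow> 'v \<Rightarrow> bool" where
  "dist_ge_3 E a b \<longleftrightarrow> a \<noteq> b \<and> \<not> E a b \<and> \<not> (\<exists>u. E a u \<and> E u b)"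

definition raag_words :: "'v set \<Rightarrow> ('v \<times> bool) list set" where
  "raag_words V = lists (V \<times> UNIV)"

definition raag_step :: "'v set \<Rightarrow> ('v \<Rightarrow> 'v \<Rightarrow> bool) \<Rightarrow> (('v \<times> bool) list \<times> ('v \<times> bool) list) set" where
  "raag_step V E =
     {(xs @ [(a, s), (a, \<not> s)] @ ys, xs @ ys) | xs ys a s. xs @ [(a, s), (a, \<not> s)] @ ys \<in> raag_words V}
   \<union> {(xs @ [(a, s), (c, t)] @ ys, xs @ [(c, t), (a, s)] @ ys) | xs ys a s c t.
        E a c \<and> xs @ [(a, s), (c, t)] @ ys \<in> raag_words V}"

definition raag_rel :: "'v set \<Rightarrow> ('v \<Rightarrow> 'v \<Rightarrow> bool) \<Rightarrow> (('v \<times> bool) list \<times> ('v \<times> bool) list) set" where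
  "raag_rel V E = Id_on (raag_words V) \<union> (raag_step V E \<union> (raag_step V E)\<inverse>)\<^sup>+"

definition raag :: "'v set \<Rightarrow> ('v \<Rightarrow> 'v \<Rightarrow> bool) \<Rightarrow> ('v \<times> bool) list set monoid" where
  "raag V E = \<lparr> carrier = raag_words V // raag_rel V E,
                mult = (\<lambda>X Y. raag_rel V E `` {(SOME x. x \<in> X) @ (SOME y. y \<in> Y)}),
                one = raag_rel V E `` {[]} \<rparr>"

definition raag_gen :: "'v set \<Rightarrow> ('v \<Rightarrow> 'v \<Rightarrow> bool) \<Rightarrow> 'v \<Rightarrow> ('v \<times> bool) list set" where
  "raag_gen V E v = raag_rel V E `` {[(v, True)]}"

definition esupp :: "'v set \<Rightarrow> ('v \<Rightarrow> 'v \<Rightarrow> bool) \<Rightarrow> ('v \<times> bool) list set \<Rightarrow> 'v set" where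
  "esupp V E g =
    (let G = raag V E;
         C = {w. \<exists>h \<in> carrier G. w \<in> inv\<^bsub>G\<^esub> h \<otimes>\<^bsub>G\<^esub> g \<otimes>\<^bsub>G\<^esub> h}
     in {v. \<exists>w \<in> C. (\<forall>w' \<in> C. length w \<le> length w') \<and> v \<in> fst ` set w})"

end

theory Submission
  imports Defs
begin

definition linv :: "'v \<times> bool \<Rightarrow> 'v \<times> bool" where
  "linv l = (fst l, \<not> snd l)"

lemma linv_linv[simp]: "linv (linv l) = l" by (simp add: linv_def)
lemma fst_linv[simp]: "fst (linv l) = fst l" by (simp add: linv_def)
lemma linv_neq[simp]: "linv l \<noteq> l" "l \<noteq> linv l" by (auto simp: linv_def prod_eq_iff)
lemma linv_inj[simp]: "linv a = linv b \<longleftrightarrow> a = b" by (metis linv_linv)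

definition pr :: "'v \<Rightarrow> 'v \<Rightarrow> ('v \<times> bool) list \<Rightarrow> ('v \<times> bool) list" where
  "pr c d w = filter (\<lambda>l. fst l = c \<or> fst l = d) w"

lemma pr_simps[simp]:
  "pr c d [] = []"
  "pr c d (l # w) = (if fst l = c \<or> fst l = d then l # pr c d w else pr c d w)"
  "pr c d (u @ w) = pr c d u @ pr c d w"
  "pr c d (rev w) = rev (pr c d w)"
  by (auto simp: pr_def rev_filter)

definition swp :: "('v \<Rightarrow> 'v \<Rightarrow> bool) \<Rightarrow> ('v \<times> bool) list \<Rightarrow> ('v \<times> bool) list \<Rightarrow> bool" where
  "swp E s t \<longleftrightarrow> (\<exists>p q a b. E (fst a) (fst b) \<and> s = p @ a # b # q \<and> t = p @ b # a # q)"

definition ceq :: "('v \<Rightarrow> 'v \<Rightarrow> bool) \<Rightarrow> ('v \<times> bool) list \<Rightarrow> ('v \<times> bool) list \<Rightarrow> bool" where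
  "ceq E = (swp E)\<^sup>*\<^sup>*"

locale tr =
  fixes E :: "'v \<Rightarrow> 'v \<Rightarrow> bool"
  assumes Esym: "E a b \<Longrightarrow> E b a" and Eirr: "\<not> E a a"
begin

abbreviation ce (infix "\<approx>" 50) where "s \<approx> t \<equiv> ceq E s t"

lemma ce_refl[simp]: "s \<approx> s" by (simp add: ceq_def)

lemma swp_sym: "swp E s t \<Longrightarrow> swp E t s"
  unfolding swp_def using Esym by blast

lemma ce_sym: "s \<approx> t \<Longrightarrow> t \<approx> s"
  unfolding ceq_def
proof (induction rule: rtranclp_induct)
  case base then show ?case by simp
next
  case (step y z) then show ?case
    by (meson converse_rtranclp_into_rtranclp swp_sym)
qed

lemma ce_trans: "s \<approx> t \<Longrightarrow> t \<approx> u \<Longrightarrow> s \<approx> u"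
  unfolding ceq_def by (rule rtranclp_trans)

lemma swp_pr: "swp E s t \<Longrightarrow> \<not> E c d \<Longrightarrow> pr c d s = pr c d t"
proof -
  assume "swp E s t" "\<not> E c d"
  then obtain p q a b where ab: "E (fst a) (fst b)" "s = p @ a # b # q" "t = p @ b # a # q"
    unfolding swp_def by blast
  have "\<not> ((fst a = c \<or> fst a = d) \<and> (fst b = c \<or> fst b = d))"
    using ab(1) \<open>\<not> E c d\<close> Esym Eirr by metis
  then show ?thesis using ab by (auto simp: pr_def)
qed

lemma ce_pr: "s \<approx> t \<Longrightarrow> \<not> E c d \<Longrightarrow> pr c d s = pr c d t"
  unfolding ceq_def
  by (induction rule: rtranclp_induct) (auto dest: swp_pr)

lemma ce_swap: "E (fst a) (fst b) \<Longrightarrow> p @ a # b # q \<approx> p @ b # a # q"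
  unfolding ceq_def swp_def by blast

lemma swp_cons: "swp E s t \<Longrightarrow> swp E (a # s) (a # t)"
  unfolding swp_def by (metis append_Cons)

lemma ce_cons: "s \<approx> t \<Longrightarrow> a # s \<approx> a # t"
  unfolding ceq_def
  by (induction rule: rtranclp_induct) (auto intro: rtranclp.rtrancl_into_rtrancl swp_cons)

lemma move_front:
  assumes "\<forall>k\<in>set t0. E (fst k) (fst m)"
  shows "t0 @ m # t2 \<approx> m # t0 @ t2"
  using assms
proof (induction t0)
  case Nil then show ?case by simp
next
  case (Cons a t0)
  have "a # t0 @ m # t2 \<approx> a # m # t0 @ t2" using Cons by (auto intro: ce_cons)
  moreover have "a # m # t0 @ t2 \<approx> m # a # t0 @ t2"
    using ce_swap[of a m "[]"] Cons.prems by simp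
  ultimately show ?case by (auto intro: ce_trans)
qed

lemma pr_nonempty: "l \<in> set t \<Longrightarrow> pr (fst l) (fst l) t \<noteq> []"
  by (auto simp: pr_def filter_empty_conv)

lemma extract_fr:
  assumes "\<forall>c. \<not> E c (fst m) \<longrightarrow> (\<exists>r. pr c (fst m) t = m # r)"
  shows "\<exists>r. t \<approx> m # r"
proof -
  obtain r0 where r0: "pr (fst m) (fst m) t = m # r0" using assms Eirr by blast
  then have "m \<in> set (pr (fst m) (fst m) t)" by simp
  then have "\<exists>x\<in>set t. fst x = fst m" by (auto simp: pr_def)
  from split_list_first_prop[OF this] obtain t0 m' t2 where t: "t = t0 @ m' # t2" and m': "fst m' = fst m"
    and t0: "\<forall>x\<in>set t0. fst x \<noteq> fst m"
    by blast
  have "pr (fst m) (fst m) t = m' # pr (fst m) (fst m) t2"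
    using t m' t0 by (simp add: pr_def)
  with r0 have mm: "m' = m" by simp
  have E0: "\<forall>k\<in>set t0. E (fst k) (fst m)"
  proof
    fix k assume k: "k \<in> set t0"
    show "E (fst k) (fst m)"
    proof (rule ccontr)
      assume nE: "\<not> E (fst k) (fst m)"
      then obtain r where r: "pr (fst k) (fst m) t = m # r" using assms by blast
      have ne: "pr (fst k) (fst m) t0 \<noteq> []" using k by (auto simp: pr_def filter_empty_conv)
      then obtain h hs where h: "pr (fst k) (fst m) t0 = h # hs" by (cases "pr (fst k) (fst m) t0") auto
      then have "h \<in> set (pr (fst k) (fst m) t0)" by simp
      then have "h \<in> set t0" by (simp add: pr_def)
      with t0 have "fst h \<noteq> fst m" by blast
      moreover have "h = m" using r h t by simp
      ultimately show False by simp
    qed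
  qed
  show ?thesis using move_front[OF E0, of t2] t mm by blast
qed

lemma PL:
  "(s \<approx> t) \<longleftrightarrow> (\<forall>c d. \<not> E c d \<longrightarrow> pr c d s = pr c d t)"
proof
  assume "s \<approx> t" then show "\<forall>c d. \<not> E c d \<longrightarrow> pr c d s = pr c d t" using ce_pr by blast
next
  assume "\<forall>c d. \<not> E c d \<longrightarrow> pr c d s = pr c d t"
  then show "s \<approx> t"
  proof (induction s arbitrary: t)
    case Nil
    have "t = []"
    proof (rule ccontr)
      assume "t \<noteq> []"
      then obtain l where "l \<in> set t" by (cases t) auto
      then have "pr (fst l) (fst l) t \<noteq> []" by (rule pr_nonempty)
      with Nil.prems[rule_format, of "fst l" "fst l"] Eirr show False by simp
    qed
    then show ?case by simp
  next
    case (Cons l s)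
    have "\<forall>c. \<not> E c (fst l) \<longrightarrow> (\<exists>r. pr c (fst l) t = l # r)"
      using Cons.prems by (metis pr_simps(2))
    then obtain r where r: "t \<approx> l # r" using extract_fr by blast
    have "\<forall>c d. \<not> E c d \<longrightarrow> pr c d s = pr c d r"
    proof (intro allI impI)
      fix c d assume "\<not> E c d"
      then have "pr c d (l # s) = pr c d (l # r)" using Cons.prems ce_pr[OF r] by simp
      then show "pr c d s = pr c d r" by (simp split: if_splits)
    qed
    then have "s \<approx> r" using Cons.IH by blast
    then have "l # s \<approx> l # r" by (rule ce_cons)
    then show ?case using r ce_sym ce_trans by blast
  qed
qed

lemma ce_app: "s \<approx> t \<Longrightarrow> s' \<approx> t' \<Longrightarrow> s @ s' \<approx> t @ t'"
  by (simp add: PL)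

lemma ce_rev: "(rev s \<approx> rev t) = (s \<approx> t)"
  by (simp add: PL)

lemma ce_cancel: "l # s \<approx> l # t \<Longrightarrow> s \<approx> t"
  unfolding PL by (metis list.inject pr_simps(2))

lemma ce_cancel_app: "u @ s \<approx> u @ t \<Longrightarrow> s \<approx> t"
  by (induction u) (auto dest: ce_cancel)

lemma swp_ls: "swp E s t \<Longrightarrow> length s = length t \<and> set s = set t"
proof -
  assume "swp E s t"
  then obtain p q a b where "s = p @ a # b # q" "t = p @ b # a # q" unfolding swp_def by blast
  then show ?thesis by auto
qed

lemma ce_ls: "s \<approx> t \<Longrightarrow> length s = length t \<and> set s = set t"
  unfolding ceq_def
proof (induction rule: rtranclp_induct)
  case base then show ?case by simp
next
  case (step y z) then show ?case using swp_ls[of y z] by simp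
qed

lemma ce_length: "s \<approx> t \<Longrightarrow> length s = length t"
  using ce_ls by blast

lemma ce_set: "s \<approx> t \<Longrightarrow> set s = set t"
  using ce_ls by blast

lemma levi:
  assumes "l # t \<approx> m # s" "l \<noteq> m"
  shows "E (fst l) (fst m) \<and> (\<exists>r. t \<approx> m # r \<and> s \<approx> l # r)"
proof -
  have fne: "fst l \<noteq> fst m"
    using ce_pr[OF assms(1), of "fst l" "fst l"] Eirr assms(2) by auto
  have El: "E (fst l) (fst m)"
  proof (rule ccontr)
    assume "\<not> E (fst l) (fst m)"
    from ce_pr[OF assms(1) this] show False using assms(2) by simp
  qed
  have "\<forall>c. \<not> E c (fst m) \<longrightarrow> (\<exists>r. pr c (fst m) t = m # r)"
  proof (intro allI impI)
    fix c assume nc: "\<not> E c (fst m)"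
    have eq: "pr c (fst m) (l # t) = m # pr c (fst m) s" using ce_pr[OF assms(1) nc] by simp
    show "\<exists>r. pr c (fst m) t = m # r"
    proof (cases "fst l = c")
      case True then show ?thesis using eq assms(2) by simp
    next
      case False then show ?thesis using eq fne by simp
    qed
  qed
  then obtain r where r: "t \<approx> m # r" using extract_fr by blast
  have "l # t \<approx> l # m # r" using r by (rule ce_cons)
  moreover have "l # m # r \<approx> m # l # r" using ce_swap[of l m "[]" r] El by simp
  ultimately have "m # s \<approx> m # l # r" using assms(1) ce_sym ce_trans by blast
  then have "s \<approx> l # r" by (rule ce_cancel)
  then show ?thesis using El r by blast
qed

lemma single_ce: "[a] \<approx> [b] \<Longrightarrow> a = b"
  using ce_pr[of "[a]" "[b]" "fst a" "fst a"] Eirr by (auto split: if_splits)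

lemma front_app:
  assumes "A @ B \<approx> l # t" "\<exists>m\<in>set A. fst m = fst l"
  shows "\<exists>A'. A \<approx> l # A'"
  using assms
proof (induction A arbitrary: t)
  case Nil then show ?case by simp
next
  case (Cons a A)
  show ?case
  proof (cases "a = l")
    case True then show ?thesis using ce_refl by blast
  next
    case False
    from levi[OF _ False] Cons.prems(1) obtain r where
      Ea: "E (fst a) (fst l)" and r1: "A @ B \<approx> l # r" and r2: "t \<approx> a # r" by auto
    have "fst a \<noteq> fst l" using Ea Eirr by metis
    then have "\<exists>m\<in>set A. fst m = fst l" using Cons.prems(2) by auto
    then obtain A' where A': "A \<approx> l # A'" using Cons.IH r1 by blast
    have "a # A \<approx> a # l # A'" using A' by (rule ce_cons)
    moreover have "a # l # A' \<approx> l # a # A'" using ce_swap[of a l "[]"] Ea by simp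
    ultimately show ?thesis using ce_trans by blast
  qed
qed

end

context tr
begin

definition red :: "('v \<times> bool) list \<Rightarrow> bool" where
  "red s \<longleftrightarrow> \<not> (\<exists>p l q. s \<approx> p @ l # linv l # q)"

lemma red_ce: "s \<approx> t \<Longrightarrow> red s \<Longrightarrow> red t"
  unfolding red_def using ce_trans by blast

lemma red_nil[simp]: "red []"
  unfolding red_def using ce_length by fastforce

lemma red_appD: "red (u @ s) \<Longrightarrow> red u \<and> red s"
proof -
  assume r: "red (u @ s)"
  have "red s"
    unfolding red_def
  proof
    assume "\<exists>p l q. s \<approx> p @ l # linv l # q"
    then obtain p l q where "s \<approx> p @ l # linv l # q" by blast
    then have "u @ s \<approx> (u @ p) @ l # linv l # q" using ce_app[OF ce_refl] by simp
    then show False using r unfolding red_def by blast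
  qed
  moreover have "red u"
    unfolding red_def
  proof
    assume "\<exists>p l q. u \<approx> p @ l # linv l # q"
    then obtain p l q where "u \<approx> p @ l # linv l # q" by blast
    then have "u @ s \<approx> p @ l # linv l # (q @ s)" using ce_app[OF _ ce_refl] by fastforce
    then show False using r unfolding red_def by blast
  qed
  ultimately show ?thesis by simp
qed

lemma red_consD: "red (l # s) \<Longrightarrow> red s"
  using red_appD[of "[l]" s] by simp

lemma swap2: "E (fst a) (fst b) \<Longrightarrow> a # b # q \<approx> b # a # q"
  using ce_swap[of a b "[]" q] by simp

lemma red_cons_aux:
  "red t \<Longrightarrow> \<not> (\<exists>t1. t \<approx> linv l # t1) \<Longrightarrow> l # t \<approx> p @ k # linv k # q \<Longrightarrow> False"
proof (induction p arbitrary: t)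
  case Nil
  show False
  proof (cases "k = l")
    case True
    then show False using Nil ce_cancel by fastforce
  next
    case False
    from levi[OF _ False[symmetric]] Nil.prems(3) obtain r where
      E1: "E (fst l) (fst k)" and r1: "t \<approx> k # r" and r2: "linv k # q \<approx> l # r" by auto
    show False
    proof (cases "linv k = l")
      case True
      then have "k = linv l" by auto
      then show False using r1 Nil.prems(2) by blast
    next
      case False
      from levi[OF r2 False] obtain r' where "r \<approx> linv k # r'" by blast
      then have "t \<approx> k # linv k # r'" using r1 ce_cons ce_trans by blast
      then show False using Nil.prems(1) unfolding red_def by (metis append_Nil)
    qed
  qed
next
  case (Cons p0 p')
  show False
  proof (cases "p0 = l")
    case True
    then have "t \<approx> p' @ k # linv k # q" using Cons.prems(3) ce_cancel by simp
    then show False using Cons.prems(1) unfolding red_def by blast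
  next
    case False
    from levi[OF _ False[symmetric]] Cons.prems(3) obtain r where
      E1: "E (fst l) (fst p0)" and r1: "t \<approx> p0 # r" and r2: "p' @ k # linv k # q \<approx> l # r"
      by auto
    have rr: "red r" using red_ce[OF r1 Cons.prems(1)] red_consD by blast
    have nr: "\<not> (\<exists>t1. r \<approx> linv l # t1)"
    proof
      assume "\<exists>t1. r \<approx> linv l # t1"
      then obtain t1 where "r \<approx> linv l # t1" by blast
      then have "t \<approx> p0 # linv l # t1" using r1 ce_cons ce_trans by blast
      moreover have "p0 # linv l # t1 \<approx> linv l # p0 # t1"
        using swap2[of p0 "linv l"] E1 Esym by simp
      ultimately show False using Cons.prems(2) ce_trans by blast
    qed
    show False using Cons.IH[OF rr nr] r2 ce_sym by blast
  qed
qed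

lemma red_cons: "red t \<Longrightarrow> \<not> (\<exists>t1. t \<approx> linv l # t1) \<Longrightarrow> red (l # t)"
  unfolding red_def[of "l # t"] using red_cons_aux by blast

lemma red_cons_iff: "red t \<Longrightarrow> red (l # t) \<longleftrightarrow> \<not> (\<exists>t1. t \<approx> linv l # t1)"
proof
  assume "red t" "red (l # t)"
  show "\<not> (\<exists>t1. t \<approx> linv l # t1)"
  proof
    assume "\<exists>t1. t \<approx> linv l # t1"
    then obtain t1 where "t \<approx> linv l # t1" by blast
    then have "l # t \<approx> [] @ l # linv l # t1" using ce_cons by simp
    then show False using \<open>red (l # t)\<close> unfolding red_def by blast
  qed
qed (rule red_cons)

lemma red_app_split:
  "red u \<Longrightarrow> red v \<Longrightarrow> \<not> red (u @ v) \<Longrightarrow> \<exists>l u' v'. u \<approx> u' @ [l] \<and> v \<approx> linv l # v'"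
proof (induction u arbitrary: v rule: rev_induct)
  case Nil then show ?case by simp
next
  case (snoc m u0)
  have ru0: "red u0" using red_appD snoc.prems(1) by blast
  show ?case
  proof (cases "red (m # v)")
    case False
    then obtain t1 where "v \<approx> linv m # t1" using red_cons snoc.prems(2) by blast
    then show ?thesis using ce_refl by blast
  next
    case True
    have "\<not> red (u0 @ (m # v))" using snoc.prems(3) by simp
    from snoc.IH[OF ru0 True this] obtain l u' v' where
      A: "u0 \<approx> u' @ [l]" and B: "m # v \<approx> linv l # v'" by blast
    show ?thesis
    proof (cases "linv l = m")
      case True
      then have "u0 @ [m] \<approx> u' @ [l, linv l]" using A ce_app[OF A ce_refl] by force
      then show ?thesis using snoc.prems(1) unfolding red_def by (metis append_Nil2 append_assoc)
    next
      case False
      from levi[OF B False[symmetric]] obtain r where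
        Em: "E (fst m) (fst l)" and r1: "v \<approx> linv l # r" and r2: "v' \<approx> m # r" by auto
      have "u0 @ [m] \<approx> u' @ [l, m]" using ce_app[OF A ce_refl[of "[m]"]] by simp
      moreover have "u' @ [l, m] \<approx> u' @ [m, l]" using ce_swap[of l m u' "[]"] Em Esym by simp
      ultimately have "u0 @ [m] \<approx> (u' @ [m]) @ [l]" using ce_trans by simp
      then show ?thesis using r1 by blast
    qed
  qed
qed

definition act :: "'v \<times> bool \<Rightarrow> ('v \<times> bool) list \<Rightarrow> ('v \<times> bool) list" where
  "act l t = (if \<exists>t1. t \<approx> linv l # t1 then (SOME t1. t \<approx> linv l # t1) else l # t)"

lemma act_yes: "t \<approx> linv l # t1 \<Longrightarrow> t \<approx> linv l # act l t"
  unfolding act_def by (auto intro: someI)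

lemma act_yes': "t \<approx> linv l # t1 \<Longrightarrow> act l t \<approx> t1"
  using act_yes ce_cancel ce_sym ce_trans by blast

lemma act_no: "\<not> (\<exists>t1. t \<approx> linv l # t1) \<Longrightarrow> act l t = l # t"
  unfolding act_def by auto

lemma act_ce: "t \<approx> t' \<Longrightarrow> act l t \<approx> act l t'"
proof (cases "\<exists>t1. t \<approx> linv l # t1")
  case True
  assume tt: "t \<approx> t'"
  from True obtain t1 where t1: "t \<approx> linv l # t1" by blast
  then have "t' \<approx> linv l # t1" using tt ce_sym ce_trans by blast
  then show ?thesis using act_yes'[OF t1] act_yes'[of t' l t1] ce_sym ce_trans by blast
next
  case False
  assume tt: "t \<approx> t'"
  then have "\<not> (\<exists>t1. t' \<approx> linv l # t1)" using False ce_trans by blast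
  then show ?thesis using act_no False tt ce_cons by simp
qed

lemma act_red: "red t \<Longrightarrow> red (act l t)"
proof (cases "\<exists>t1. t \<approx> linv l # t1")
  case True
  assume "red t"
  then show ?thesis using act_yes[of t l] True red_ce red_consD by blast
next
  case False
  assume "red t"
  then show ?thesis using act_no[OF False] red_cons[OF _ False] by simp
qed

lemma act_inv: "red t \<Longrightarrow> act (linv l) (act l t) \<approx> t"
proof (cases "\<exists>t1. t \<approx> linv l # t1")
  case True
  assume rt: "red t"
  have a: "t \<approx> linv l # act l t" using True act_yes by blast
  have "\<not> (\<exists>s. act l t \<approx> linv (linv l) # s)"
  proof
    assume "\<exists>s. act l t \<approx> linv (linv l) # s"
    then obtain s where "act l t \<approx> l # s" by auto
    then have "t \<approx> [] @ linv l # linv (linv l) # s" using a ce_cons ce_trans by auto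
    then show False using rt unfolding red_def by blast
  qed
  then have "act (linv l) (act l t) = linv l # act l t" by (rule act_no)
  then show ?thesis using a ce_sym by simp
next
  case False
  then have "act l t = l # t" by (rule act_no)
  then show ?thesis using act_yes'[of "l # t" "linv l" t] by simp
qed

lemma act_comm_aux:
  assumes E1: "E (fst l) (fst m)" and tm: "t \<approx> linv m # t1" and nl: "\<not> (\<exists>s. t \<approx> linv l # s)"
  shows "act l (act m t) \<approx> act m (act l t)"
proof -
  have a: "t \<approx> linv m # act m t" using act_yes tm by blast
  have n2: "\<not> (\<exists>s. act m t \<approx> linv l # s)"
  proof
    assume "\<exists>s. act m t \<approx> linv l # s"
    then obtain s where "act m t \<approx> linv l # s" by blast
    then have "t \<approx> linv m # linv l # s" using a ce_cons ce_trans by blast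
    moreover have "linv m # linv l # s \<approx> linv l # linv m # s" using swap2 E1 Esym by simp
    ultimately show False using nl ce_trans by blast
  qed
  have L: "act l (act m t) = l # act m t" using act_no[OF n2] .
  have R0: "act l t = l # t" using act_no nl by blast
  have "l # t \<approx> l # linv m # act m t" using a ce_cons by blast
  moreover have "l # linv m # act m t \<approx> linv m # l # act m t" using swap2 E1 by simp
  ultimately have "l # t \<approx> linv m # (l # act m t)" using ce_trans by blast
  then have "act m (l # t) \<approx> l # act m t" by (rule act_yes')
  then show ?thesis using L R0 ce_sym by simp
qed

lemma act_comm:
  assumes E1: "E (fst l) (fst m)"
  shows "act l (act m t) \<approx> act m (act l t)"
proof (cases "\<exists>s. t \<approx> linv l # s")
  case True
  note Tl = True
  show ?thesis
  proof (cases "\<exists>s. t \<approx> linv m # s")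
    case True
    have a: "t \<approx> linv m # act m t" using act_yes True by blast
    have b: "t \<approx> linv l # act l t" using act_yes Tl by blast
    have ne: "linv m \<noteq> linv l" using E1 Eirr by (metis fst_linv)
    from levi[OF _ ne] a b ce_sym ce_trans obtain r where
      r1: "act m t \<approx> linv l # r" and r2: "act l t \<approx> linv m # r" by blast
    have "act l (act m t) \<approx> r" using act_yes'[OF r1] .
    moreover have "act m (act l t) \<approx> r" using act_yes'[OF r2] .
    ultimately show ?thesis using ce_sym ce_trans by blast
  next
    case False
    from act_comm_aux[of m l, OF _ _ False] E1 Esym Tl ce_sym show ?thesis by blast
  qed
next
  case False
  note Fl = False
  show ?thesis
  proof (cases "\<exists>s. t \<approx> linv m # s")
    case True
    then show ?thesis using act_comm_aux[OF E1 _ Fl] by blast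
  next
    case False
    have "m \<noteq> linv l" using E1 Eirr by (metis fst_linv)
    then have n1: "\<not> (\<exists>s. m # t \<approx> linv l # s)" using levi Fl by blast
    have "l \<noteq> linv m" using E1 Eirr by (metis fst_linv)
    then have n2: "\<not> (\<exists>s. l # t \<approx> linv m # s)" using levi False by blast
    have "act l (act m t) = l # m # t" using act_no[OF False] act_no[OF n1] by simp
    moreover have "act m (act l t) = m # l # t" using act_no[OF Fl] act_no[OF n2] by simp
    ultimately show ?thesis using swap2 E1 by simp
  qed
qed

definition Act :: "('v \<times> bool) list \<Rightarrow> ('v \<times> bool) list \<Rightarrow> ('v \<times> bool) list" where
  "Act w t = foldr act w t"

lemma Act_simps[simp]: "Act [] t = t" "Act (l # w) t = act l (Act w t)"
  "Act (u @ w) t = Act u (Act w t)"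
  by (simp_all add: Act_def)

lemma Act_red: "red t \<Longrightarrow> red (Act w t)"
  by (induction w) (auto intro: act_red)

lemma Act_ce: "t \<approx> t' \<Longrightarrow> Act w t \<approx> Act w t'"
  by (induction w) (auto intro: act_ce)

lemma Act_red_self: "red w \<Longrightarrow> Act w [] \<approx> w"
proof (induction w)
  case Nil then show ?case by simp
next
  case (Cons l w)
  have rw: "red w" using Cons.prems red_consD by blast
  have "Act (l # w) [] \<approx> act l w" using act_ce Cons.IH[OF rw] by simp
  moreover have "act l w = l # w" using act_no red_cons_iff[OF rw] Cons.prems by blast
  ultimately show ?case by simp
qed

end

locale rg = tr E for E :: "'v \<Rightarrow> 'v \<Rightarrow> bool" +
  fixes V :: "'v set"
  assumes EV: "E a b \<Longrightarrow> a \<in> V \<and> b \<in> V"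
begin

abbreviation W where "W \<equiv> raag_words V"
abbreviation R where "R \<equiv> raag_rel V E"
abbreviation G where "G \<equiv> raag V E"

definition cls :: "('v \<times> bool) list \<Rightarrow> ('v \<times> bool) list set" where
  "cls w = R `` {w}"

lemma words_iff: "w \<in> W \<longleftrightarrow> (\<forall>l\<in>set w. fst l \<in> V)"
  unfolding raag_words_def by (auto simp: lists_eq_set)

lemma words_app[simp]: "u @ v \<in> W \<longleftrightarrow> u \<in> W \<and> v \<in> W"
  unfolding raag_words_def by auto

lemma words_cons[simp]: "l # v \<in> W \<longleftrightarrow> fst l \<in> V \<and> v \<in> W"
  unfolding raag_words_def by (cases l) auto

lemma words_nil[simp]: "[] \<in> W"
  unfolding raag_words_def by auto

lemma words_rev[simp]: "rev u \<in> W \<longleftrightarrow> u \<in> W"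
  unfolding raag_words_def by auto

lemma step_cases:
  assumes "(u, v) \<in> raag_step V E"
  obtains (c) xs ys a s where "u = xs @ [(a, s), (a, \<not> s)] @ ys" "v = xs @ ys" "u \<in> W"
   | (s) xs ys a s c t where "u = xs @ [(a, s), (c, t)] @ ys" "v = xs @ [(c, t), (a, s)] @ ys"
      "E a c" "u \<in> W"
  using assms unfolding raag_step_def Un_iff mem_Collect_eq
  by (elim disjE exE conjE; simp only: prod.inject; elim conjE)

lemma step_c: "xs @ [(a, s), (a, \<not> s)] @ ys \<in> W \<Longrightarrow>
   (xs @ [(a, s), (a, \<not> s)] @ ys, xs @ ys) \<in> raag_step V E"
  unfolding raag_step_def by (rule UnI1, rule CollectI, intro exI conjI) auto

lemma step_s: "E a c \<Longrightarrow> xs @ [(a, s), (c, t)] @ ys \<in> W \<Longrightarrow>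
   (xs @ [(a, s), (c, t)] @ ys, xs @ [(c, t), (a, s)] @ ys) \<in> raag_step V E"
  unfolding raag_step_def by (rule UnI2, rule CollectI, intro exI conjI) auto

lemma step_words: "(u, v) \<in> raag_step V E \<Longrightarrow> u \<in> W \<and> v \<in> W"
  by (erule step_cases) auto

lemma rel_words: "(u, v) \<in> R \<Longrightarrow> u \<in> W \<and> v \<in> W"
proof -
  assume "(u, v) \<in> R"
  then consider "(u, v) \<in> Id_on W" | "(u, v) \<in> (raag_step V E \<union> (raag_step V E)\<inverse>)\<^sup>+"
    unfolding raag_rel_def by blast
  then show ?thesis
  proof cases
    case 1 then show ?thesis by auto
  next
    case 2 then show ?thesis
      by (induction rule: trancl_induct) (auto dest: step_words)
  qed
qed

lemma rel_refl: "u \<in> W \<Longrightarrow> (u, u) \<in> R"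
  unfolding raag_rel_def by auto

lemma rel_sym: "(u, v) \<in> R \<Longrightarrow> (v, u) \<in> R"
proof -
  assume "(u, v) \<in> R"
  then consider "(u, v) \<in> Id_on W" | "(u, v) \<in> (raag_step V E \<union> (raag_step V E)\<inverse>)\<^sup>+"
    unfolding raag_rel_def by blast
  then show ?thesis
  proof cases
    case 1 then show ?thesis unfolding raag_rel_def by auto
  next
    case 2
    then have "(v, u) \<in> ((raag_step V E \<union> (raag_step V E)\<inverse>)\<^sup>+)\<inverse>" by simp
    then have "(v, u) \<in> ((raag_step V E \<union> (raag_step V E)\<inverse>)\<inverse>)\<^sup>+"
      by (simp add: trancl_converse)
    then show ?thesis unfolding raag_rel_def by (simp add: converse_Un Un_commute)
  qed
qed

lemma rel_trans: "(u, v) \<in> R \<Longrightarrow> (v, w) \<in> R \<Longrightarrow> (u, w) \<in> R"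
  unfolding raag_rel_def by (auto intro: trancl_trans)

lemma rel_equiv: "equiv W R"
proof (rule equivI)
  show "R \<subseteq> W \<times> W"
  proof
    fix p assume "p \<in> R"
    then show "p \<in> W \<times> W" using rel_words[of "fst p" "snd p"] by (simp add: mem_Times_iff)
  qed
  show "refl_on W R" by (rule refl_onI) (rule rel_refl)
  show "sym R" by (rule symI) (rule rel_sym)
  show "trans R" by (rule transI) (rule rel_trans)
qed

lemma step_rel: "(u, v) \<in> raag_step V E \<Longrightarrow> (u, v) \<in> R"
  unfolding raag_rel_def by (rule UnI2, rule r_into_trancl, rule UnI1)

lemma step_app:
  assumes "(u, v) \<in> raag_step V E" "x \<in> W" "y \<in> W"
  shows "(x @ u @ y, x @ v @ y) \<in> raag_step V E"
proof -
  from assms(1) show ?thesis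
  proof (cases rule: step_cases)
    case (c xs ys a s)
    then show ?thesis using assms(2,3) step_c[of "x @ xs" a s "ys @ y"] by simp
  next
    case (s xs ys a s c t)
    then show ?thesis using assms(2,3) step_s[of a c "x @ xs" s t "ys @ y"] by simp
  qed
qed

lemma stepsym_app:
  assumes "(u, v) \<in> raag_step V E \<union> (raag_step V E)\<inverse>" "x \<in> W" "y \<in> W"
  shows "(x @ u @ y, x @ v @ y) \<in> raag_step V E \<union> (raag_step V E)\<inverse>"
  using assms(1)
proof
  assume "(u, v) \<in> raag_step V E"
  then show ?thesis using step_app[OF _ assms(2,3)] by (rule_tac UnI1)
next
  assume "(u, v) \<in> (raag_step V E)\<inverse>"
  then have "(v, u) \<in> raag_step V E" by (rule converseD)
  then have "(x @ v @ y, x @ u @ y) \<in> raag_step V E" using step_app[OF _ assms(2,3)] by blast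
  then show ?thesis by (intro UnI2 converseI)
qed

lemma rel_app1:
  assumes "(u, v) \<in> R" "x \<in> W" "y \<in> W"
  shows "(x @ u @ y, x @ v @ y) \<in> R"
proof -
  from assms(1) consider "(u, v) \<in> Id_on W" | "(u, v) \<in> (raag_step V E \<union> (raag_step V E)\<inverse>)\<^sup>+"
    unfolding raag_rel_def by blast
  then show ?thesis
  proof cases
    case 1
    then have "u = v" "u \<in> W" by (auto simp: Id_on_iff)
    then show ?thesis using assms rel_refl by simp
  next
    case 2
    then have "(x @ u @ y, x @ v @ y) \<in> (raag_step V E \<union> (raag_step V E)\<inverse>)\<^sup>+"
    proof (induction rule: trancl_induct)
      case (base v)
      then show ?case using stepsym_app[OF _ assms(2,3)] by (rule_tac r_into_trancl)
    next
      case (step v w)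
      then have "(x @ v @ y, x @ w @ y) \<in> raag_step V E \<union> (raag_step V E)\<inverse>"
        using stepsym_app[OF _ assms(2,3)] by blast
      then show ?case using trancl_into_trancl[OF step.IH] by blast
    qed
    then show ?thesis unfolding raag_rel_def by blast
  qed
qed

lemma rel_app:
  assumes "(u, v) \<in> R" "(u', v') \<in> R"
  shows "(u @ u', v @ v') \<in> R"
proof -
  have w: "u' \<in> W" "v \<in> W" using rel_words[OF assms(2)] rel_words[OF assms(1)] by blast+
  have "([] @ u @ u', [] @ v @ u') \<in> R" using rel_app1[OF assms(1) words_nil w(1)] .
  moreover have "(v @ u' @ [], v @ v' @ []) \<in> R" using rel_app1[OF assms(2) w(2) words_nil] .
  ultimately show ?thesis using rel_trans by simp
qed

definition winv :: "('v \<times> bool) list \<Rightarrow> ('v \<times> bool) list" where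
  "winv w = rev (map linv w)"

lemma winv_simps[simp]: "winv [] = []" "winv (l # w) = winv w @ [linv l]"
  "winv (u @ w) = winv w @ winv u" "length (winv w) = length w" "winv (winv w) = w"
  by (simp_all add: winv_def rev_map comp_def)

lemma winv_words[simp]: "winv w \<in> W \<longleftrightarrow> w \<in> W"
  by (auto simp: winv_def words_iff)

lemma cancel_rel: "fst l \<in> V \<Longrightarrow> ([l, linv l], []) \<in> R"
proof -
  assume "fst l \<in> V"
  then have "([] @ [(fst l, snd l), (fst l, \<not> snd l)] @ [], [] @ []) \<in> raag_step V E"
    by (intro step_c) simp
  then show ?thesis using step_rel by (simp add: linv_def)
qed

lemma winv_rel: "w \<in> W \<Longrightarrow> (w @ winv w, []) \<in> R \<and> (winv w @ w, []) \<in> R"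
proof (induction w)
  case Nil then show ?case by (simp add: rel_refl)
next
  case (Cons l w)
  have lV: "fst l \<in> V" "w \<in> W" using Cons.prems by auto
  have lw: "[l] \<in> W" "[linv l] \<in> W" using lV by auto
  have "([l] @ (w @ winv w) @ [linv l], [l] @ [] @ [linv l]) \<in> R"
    using rel_app1[OF conjunct1[OF Cons.IH[OF lV(2)]] lw] .
  moreover have "([l, linv l], []) \<in> R" using cancel_rel lV by blast
  ultimately have A: "((l # w) @ winv (l # w), []) \<in> R" using rel_trans by simp
  have lV': "fst (linv l) \<in> V" using lV by simp
  have "(winv w @ [linv l, linv (linv l)] @ w, winv w @ [] @ w) \<in> R"
    by (rule rel_app1[OF cancel_rel[OF lV']]) (use lV in auto)
  moreover have "(winv w @ [] @ w, []) \<in> R" using Cons.IH lV by simp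
  ultimately have B: "(winv (l # w) @ (l # w), []) \<in> R" using rel_trans by simp
  show ?case using A B by simp
qed

lemma swp_rel: "swp E s t \<Longrightarrow> s \<in> W \<Longrightarrow> (s, t) \<in> R"
proof -
  assume "swp E s t" "s \<in> W"
  then obtain p q a b where ab: "E (fst a) (fst b)" "s = p @ a # b # q" "t = p @ b # a # q"
    unfolding swp_def by blast
  have "(p @ [(fst a, snd a), (fst b, snd b)] @ q, p @ [(fst b, snd b), (fst a, snd a)] @ q) \<in> raag_step V E"
    using ab \<open>s \<in> W\<close> step_s[of "fst a" "fst b" p "snd a" "snd b" q] by simp
  then show ?thesis using ab step_rel by simp
qed

lemma ce_rel: "s \<approx> t \<Longrightarrow> s \<in> W \<Longrightarrow> (s, t) \<in> R"
  unfolding ceq_def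
proof (induction rule: rtranclp_induct)
  case base then show ?case by (rule rel_refl)
next
  case (step y z)
  then have "(s, y) \<in> R" by blast
  then have "y \<in> W" by (rule rel_words[THEN conjunct2])
  then show ?case using step swp_rel rel_trans by blast
qed

lemma nonred_rel: "s \<approx> p @ l # linv l # q \<Longrightarrow> s \<in> W \<Longrightarrow> (s, p @ q) \<in> R"
proof -
  assume a: "s \<approx> p @ l # linv l # q" "s \<in> W"
  then have r1: "(s, p @ l # linv l # q) \<in> R" by (rule ce_rel)
  then have "p @ l # linv l # q \<in> W" by (rule rel_words[THEN conjunct2])
  then have "fst l \<in> V" "p \<in> W" "q \<in> W" by auto
  then have "(p @ [l, linv l] @ q, p @ [] @ q) \<in> R" using rel_app1 cancel_rel by blast
  then show ?thesis using r1 rel_trans by simp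
qed

lemma Act_step: "(u, u') \<in> raag_step V E \<Longrightarrow> red t \<Longrightarrow> Act u t \<approx> Act u' t"
proof -
  assume st: "(u, u') \<in> raag_step V E" and rt: "red t"
  from st show ?thesis
  proof (cases rule: step_cases)
    case (c xs ys a s)
    have "act (linv (a, \<not> s)) (act (a, \<not> s) (Act ys t)) \<approx> Act ys t"
      by (rule act_inv) (rule Act_red[OF rt])
    then have "act (a, s) (act (a, \<not> s) (Act ys t)) \<approx> Act ys t" by (simp add: linv_def)
    then have "Act xs (act (a, s) (act (a, \<not> s) (Act ys t))) \<approx> Act xs (Act ys t)" by (rule Act_ce)
    then show ?thesis using c(1,2) by simp
  next
    case (s xs ys a s c b)
    have "act (a, s) (act (c, b) (Act ys t)) \<approx> act (c, b) (act (a, s) (Act ys t))"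
      using act_comm s(3) by simp
    then have "Act xs (act (a, s) (act (c, b) (Act ys t))) \<approx> Act xs (act (c, b) (act (a, s) (Act ys t)))"
      by (rule Act_ce)
    then show ?thesis using s(1,2) by simp
  qed
qed

lemma stepsym_Act: "(u, v) \<in> raag_step V E \<union> (raag_step V E)\<inverse> \<Longrightarrow> Act u [] \<approx> Act v []"
proof (erule UnE)
  assume "(u, v) \<in> raag_step V E"
  then show ?thesis using Act_step red_nil by blast
next
  assume "(u, v) \<in> (raag_step V E)\<inverse>"
  then have "(v, u) \<in> raag_step V E" by (rule converseD)
  then have "Act v [] \<approx> Act u []" using Act_step red_nil by blast
  then show ?thesis by (rule ce_sym)
qed

lemma Act_rel: "(u, v) \<in> R \<Longrightarrow> Act u [] \<approx> Act v []"
proof -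
  assume "(u, v) \<in> R"
  then consider "(u, v) \<in> Id_on W" | "(u, v) \<in> (raag_step V E \<union> (raag_step V E)\<inverse>)\<^sup>+"
    unfolding raag_rel_def by blast
  then show ?thesis
  proof cases
    case 1 then have "u = v" by (auto simp: Id_on_iff)
    then show ?thesis by simp
  next
    case 2 then show ?thesis
    proof (induction rule: trancl_induct)
      case (base v)
      then show ?case by (rule stepsym_Act)
    next
      case (step v w)
      then have "Act v [] \<approx> Act w []" by (rule_tac stepsym_Act) simp
      then show ?case using step.IH by (rule_tac ce_trans)
    qed
  qed
qed

theorem word_problem: "(u, v) \<in> R \<Longrightarrow> red u \<Longrightarrow> red v \<Longrightarrow> u \<approx> v"
proof -
  assume a: "(u, v) \<in> R" "red u" "red v"
  have 1: "u \<approx> Act u []" using Act_red_self[OF a(2)] by (rule ce_sym)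
  have 2: "Act u [] \<approx> Act v []" using a(1) by (rule Act_rel)
  have 3: "Act v [] \<approx> v" using Act_red_self[OF a(3)] .
  show ?thesis using ce_trans[OF ce_trans[OF 1 2] 3] .
qed

end

context rg
begin

lemma cls_mem: "v \<in> cls w \<longleftrightarrow> (w, v) \<in> R"
  unfolding cls_def by simp

lemma cls_self: "w \<in> W \<Longrightarrow> w \<in> cls w"
  unfolding cls_mem by (rule rel_refl)

lemma cls_eq: "(u, v) \<in> R \<Longrightarrow> cls u = cls v"
  unfolding cls_def using equiv_class_eq[OF rel_equiv] by blast

lemma cls_eqD: "cls u = cls v \<Longrightarrow> u \<in> W \<Longrightarrow> (u, v) \<in> R"
proof -
  assume "cls u = cls v" "u \<in> W"
  then have "u \<in> cls v" using cls_self by blast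
  then show ?thesis unfolding cls_mem by (rule rel_sym)
qed

lemma cls_of_mem: "w \<in> cls u \<Longrightarrow> cls w = cls u"
  unfolding cls_mem by (rule cls_eq[symmetric])

lemma carrier_G: "carrier G = W // R"
  unfolding raag_def by simp

lemma cls_carrier: "w \<in> W \<Longrightarrow> cls w \<in> carrier G"
  unfolding carrier_G cls_def by (rule quotientI)

lemma carrier_cls: "X \<in> carrier G \<Longrightarrow> \<exists>w\<in>W. X = cls w"
  unfolding carrier_G cls_def by (erule quotientE) blast

lemma carrier_words: "X \<in> carrier G \<Longrightarrow> w \<in> X \<Longrightarrow> w \<in> W"
  using carrier_cls cls_mem rel_words by blast

lemma mult_G: "X \<otimes>\<^bsub>G\<^esub> Y = R `` {(SOME x. x \<in> X) @ (SOME y. y \<in> Y)}"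
  unfolding raag_def by simp

lemma one_G: "\<one>\<^bsub>G\<^esub> = cls []"
  unfolding raag_def cls_def by simp

lemma mult_cls: "u \<in> W \<Longrightarrow> v \<in> W \<Longrightarrow> cls u \<otimes>\<^bsub>G\<^esub> cls v = cls (u @ v)"
proof -
  assume uv: "u \<in> W" "v \<in> W"
  have x: "(SOME x. x \<in> cls u) \<in> cls u" using cls_self[OF uv(1)] by (rule someI)
  have y: "(SOME x. x \<in> cls v) \<in> cls v" using cls_self[OF uv(2)] by (rule someI)
  have "(u @ v, (SOME x. x \<in> cls u) @ (SOME x. x \<in> cls v)) \<in> R"
    using rel_app x y unfolding cls_mem by blast
  then have "cls ((SOME x. x \<in> cls u) @ (SOME x. x \<in> cls v)) = cls (u @ v)"
    by (rule cls_eq[symmetric])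
  then show ?thesis unfolding mult_G by (simp add: cls_def)
qed

lemma group_G: "group G"
proof (rule groupI)
  fix x y assume "x \<in> carrier G" "y \<in> carrier G"
  then obtain u v where "u \<in> W" "v \<in> W" "x = cls u" "y = cls v" using carrier_cls by metis
  then show "x \<otimes>\<^bsub>G\<^esub> y \<in> carrier G" using mult_cls cls_carrier by simp
next
  show "\<one>\<^bsub>G\<^esub> \<in> carrier G" using one_G cls_carrier by simp
next
  fix x y z assume "x \<in> carrier G" "y \<in> carrier G" "z \<in> carrier G"
  then obtain u v w where "u \<in> W" "v \<in> W" "w \<in> W" "x = cls u" "y = cls v" "z = cls w"
    using carrier_cls by metis
  then show "x \<otimes>\<^bsub>G\<^esub> y \<otimes>\<^bsub>G\<^esub> z = x \<otimes>\<^bsub>G\<^esub> (y \<otimes>\<^bsub>G\<^esub> z)" using mult_cls by simp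
next
  fix x assume "x \<in> carrier G"
  then obtain u where "u \<in> W" "x = cls u" using carrier_cls by metis
  then show "\<one>\<^bsub>G\<^esub> \<otimes>\<^bsub>G\<^esub> x = x" using mult_cls one_G by simp
next
  fix x assume "x \<in> carrier G"
  then obtain u where u: "u \<in> W" "x = cls u" using carrier_cls by metis
  have "cls (winv u) \<otimes>\<^bsub>G\<^esub> x = cls (winv u @ u)" using mult_cls u by simp
  also have "\<dots> = cls []" using winv_rel[OF u(1)] cls_eq by blast
  finally show "\<exists>y\<in>carrier G. y \<otimes>\<^bsub>G\<^esub> x = \<one>\<^bsub>G\<^esub>" using cls_carrier u one_G by auto
qed

sublocale grp: group G by (rule group_G)

lemma inv_cls: "w \<in> W \<Longrightarrow> inv\<^bsub>G\<^esub> (cls w) = cls (winv w)"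
proof -
  assume w: "w \<in> W"
  have "cls (winv w) \<otimes>\<^bsub>G\<^esub> cls w = \<one>\<^bsub>G\<^esub>"
    using mult_cls w winv_rel[OF w] cls_eq one_G by simp
  then show ?thesis using grp.inv_equality cls_carrier w by simp
qed

definition pw :: "nat \<Rightarrow> ('v \<times> bool) list \<Rightarrow> ('v \<times> bool) list" where
  "pw n w = concat (replicate n w)"

lemma pw_simps[simp]: "pw 0 w = []" "pw (Suc n) w = w @ pw n w"
  by (simp_all add: pw_def)

lemma pw_Suc2: "pw (Suc n) w = pw n w @ w"
  by (induction n) auto

lemma pw_add: "pw (m + n) w = pw m w @ pw n w"
  by (induction m) auto

lemma pw_words[simp]: "w \<in> W \<Longrightarrow> pw n w \<in> W"
  by (induction n) auto

lemma length_pw[simp]: "length (pw n w) = n * length w"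
  by (induction n) auto

lemma pow_cls: "w \<in> W \<Longrightarrow> cls w [^]\<^bsub>G\<^esub> n = cls (pw n w)"
proof (induction n)
  case 0 then show ?case using one_G by simp
next
  case (Suc n) then show ?case using mult_cls pw_Suc2 by simp
qed

definition len :: "('v \<times> bool) list set \<Rightarrow> nat" where
  "len X = (LEAST n. \<exists>w\<in>X. length w = n)"

lemma len_le: "w \<in> X \<Longrightarrow> len X \<le> length w"
  unfolding len_def by (rule Least_le) blast

lemma len_ex: "w \<in> X \<Longrightarrow> \<exists>w'\<in>X. length w' = len X"
  unfolding len_def by (rule LeastI_ex) blast

lemma nonred_shorter: "w \<in> W \<Longrightarrow> \<not> red w \<Longrightarrow> \<exists>w'. (w, w') \<in> R \<and> length w' + 2 = length w"
proof -
  assume "w \<in> W" "\<not> red w"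
  then obtain p l q where "w \<approx> p @ l # linv l # q" unfolding red_def by blast
  then have "(w, p @ q) \<in> R" "length w = length (p @ l # linv l # q)"
    using nonred_rel \<open>w \<in> W\<close> ce_length by blast+
  then show ?thesis by auto
qed

lemma min_red: "X \<in> carrier G \<Longrightarrow> w \<in> X \<Longrightarrow> length w = len X \<Longrightarrow> red w"
proof (rule ccontr)
  assume a: "X \<in> carrier G" "w \<in> X" "length w = len X" "\<not> red w"
  have wW: "w \<in> W" using carrier_words a(1,2) .
  obtain w' where w': "(w, w') \<in> R" "length w' + 2 = length w" using nonred_shorter wW a(4) by blast
  have "X = cls w" using a(1,2) carrier_cls cls_of_mem by metis
  then have "w' \<in> X" using w' cls_mem by simp
  then have "len X \<le> length w'" by (rule len_le)
  then show False using w' a(3) by simp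
qed

lemma red_rep: "X \<in> carrier G \<Longrightarrow> \<exists>w\<in>X. red w \<and> length w = len X"
proof -
  assume X: "X \<in> carrier G"
  then obtain u where "u \<in> W" "X = cls u" using carrier_cls by blast
  then have "u \<in> X" using cls_self by simp
  then obtain w where "w \<in> X" "length w = len X" using len_ex by blast
  then show ?thesis using min_red X by blast
qed

lemma red_len: "w \<in> W \<Longrightarrow> red w \<Longrightarrow> len (cls w) = length w"
proof -
  assume w: "w \<in> W" "red w"
  obtain w0 where w0: "w0 \<in> cls w" "red w0" "length w0 = len (cls w)"
    using red_rep cls_carrier w by blast
  have "w \<approx> w0" using word_problem w0 w unfolding cls_mem by blast
  then show ?thesis using ce_length w0 by simp
qed

lemma nonred_len: "w \<in> W \<Longrightarrow> \<not> red w \<Longrightarrow> len (cls w) + 2 \<le> length w"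
proof -
  assume w: "w \<in> W" "\<not> red w"
  obtain w' where w': "(w, w') \<in> R" "length w' + 2 = length w" using nonred_shorter w by blast
  then have "len (cls w) \<le> length w'" using len_le cls_mem by blast
  then show ?thesis using w' by simp
qed

lemma len_mult: "X \<in> carrier G \<Longrightarrow> Y \<in> carrier G \<Longrightarrow> len (X \<otimes>\<^bsub>G\<^esub> Y) \<le> len X + len Y"
proof -
  assume XY: "X \<in> carrier G" "Y \<in> carrier G"
  obtain u where u: "u \<in> X" "length u = len X" using red_rep XY(1) by blast
  obtain v where v: "v \<in> Y" "length v = len Y" using red_rep XY(2) by blast
  have uW: "u \<in> W" "v \<in> W" using carrier_words XY u v by blast+
  have "X = cls u" "Y = cls v" using XY u v carrier_cls cls_of_mem by metis+
  then have "X \<otimes>\<^bsub>G\<^esub> Y = cls (u @ v)" using mult_cls uW by simp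
  moreover have "len (cls (u @ v)) \<le> length (u @ v)" by (rule len_le, rule cls_self) (simp add: uW)
  ultimately have "len (X \<otimes>\<^bsub>G\<^esub> Y) \<le> length (u @ v)" by simp
  then show ?thesis using u v by simp
qed

lemma len_inv: "X \<in> carrier G \<Longrightarrow> len (inv\<^bsub>G\<^esub> X) \<le> len X"
proof -
  assume X: "X \<in> carrier G"
  obtain u where u: "u \<in> X" "length u = len X" using red_rep X by blast
  have uW: "u \<in> W" using carrier_words X u by blast
  have "X = cls u" using X u carrier_cls cls_of_mem by metis
  then have "inv\<^bsub>G\<^esub> X = cls (winv u)" using inv_cls uW by simp
  moreover have "len (cls (winv u)) \<le> length (winv u)" by (rule len_le, rule cls_self) (simp add: uW)
  ultimately have "len (inv\<^bsub>G\<^esub> X) \<le> length (winv u)" by simp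
  then show ?thesis using u by simp
qed

end

lemma LS_aux:
  "\<forall>xs ys. length xs + length ys = k \<longrightarrow> xs @ ys = ys @ xs \<longrightarrow>
     (\<exists>r m n. xs = concat (replicate m r) \<and> ys = concat (replicate n r))"
proof (induction k rule: less_induct)
  case (less k)
  show ?case
  proof (intro allI impI)
    fix xs ys :: "'a list"
    assume k: "length xs + length ys = k" and c: "xs @ ys = ys @ xs"
    show "\<exists>r m n. xs = concat (replicate m r) \<and> ys = concat (replicate n r)"
    proof (cases "xs = [] \<or> ys = []")
      case True
      then show ?thesis
      proof
        assume "xs = []" then show ?thesis by (rule_tac x=ys in exI, rule_tac x=0 in exI, rule_tac x=1 in exI) simp
      next
        assume "ys = []" then show ?thesis by (rule_tac x=xs in exI, rule_tac x=1 in exI, rule_tac x=0 in exI) simp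
      qed
    next
      case False
      show ?thesis
      proof (cases "length xs \<le> length ys")
        case True
        have "take (length xs) (xs @ ys) = xs" by simp
        then have tx: "take (length xs) ys = xs" using c True by simp
        define zs where "zs = drop (length xs) ys"
        have ys: "ys = xs @ zs" unfolding zs_def using tx by (metis append_take_drop_id)
        have "xs @ xs @ zs = xs @ zs @ xs" using c ys by simp
        then have c2: "xs @ zs = zs @ xs" by simp
        have "length xs + length zs < k" using k ys False by auto
        then obtain r m n where "xs = concat (replicate m r)" "zs = concat (replicate n r)"
          using less.IH c2 by blast
        then have "ys = concat (replicate (m + n) r)" using ys by (simp add: replicate_add)
        then show ?thesis using \<open>xs = concat (replicate m r)\<close> by blast
      next
        case False2: False
        have "take (length ys) (ys @ xs) = ys" by simp
        then have tx: "take (length ys) xs = ys" using c False2 by (metis append_eq_append_conv_if nat_le_linear take_all)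
        define zs where "zs = drop (length ys) xs"
        have xs: "xs = ys @ zs" unfolding zs_def using tx by (metis append_take_drop_id)
        have "ys @ zs @ ys = ys @ ys @ zs" using c xs by simp
        then have c2: "zs @ ys = ys @ zs" by simp
        have "length zs + length ys < k" using k xs False by auto
        then obtain r m n where "zs = concat (replicate m r)" "ys = concat (replicate n r)"
          using less.IH c2 by blast
        then have "xs = concat (replicate (n + m) r)" using xs by (simp add: replicate_add)
        then show ?thesis using \<open>ys = concat (replicate n r)\<close> by blast
      qed
    qed
  qed
qed

lemma LS: "xs @ ys = ys @ xs \<Longrightarrow> \<exists>r m n. xs = concat (replicate m r) \<and> ys = concat (replicate n r)"
  using LS_aux by blast

definition cnt :: "'v \<Rightarrow> ('v \<times> bool) list \<Rightarrow> nat" where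
  "cnt c w = length (filter (\<lambda>l. fst l = c) w)"

lemma cnt_simps[simp]: "cnt c [] = 0" "cnt c (u @ w) = cnt c u + cnt c w"
  "cnt c (l # w) = (if fst l = c then Suc (cnt c w) else cnt c w)"
  by (simp_all add: cnt_def)

lemma cnt_concat: "cnt c (concat (replicate n r)) = n * cnt c r"
  by (induction n) auto

lemma cnt_pr: "c = a \<or> c = b \<Longrightarrow> cnt c (pr a b w) = cnt c w"
  by (induction w) (auto simp: pr_def)

lemma pr_concat: "pr a b (concat (replicate n r)) = concat (replicate n (pr a b r))"
  by (induction n) auto

lemma concat_mult: "concat (replicate n (concat (replicate m r))) = concat (replicate (n * m) r)"
  by (induction n) (auto simp: replicate_add)

lemma cnt_pos: "c \<in> fst ` set w \<Longrightarrow> 0 < cnt c w"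
  by (induction w) auto

context rg
begin

lemma pw_concat: "pw n w = concat (replicate n w)"
  by (simp add: pw_def)

lemma comm_key:
  assumes comm: "wa @ z \<approx> z @ wa" and nE: "\<not> E c d"
  shows "\<exists>r \<alpha> \<beta>. pr c d wa = concat (replicate \<alpha> r) \<and> pr c d z = concat (replicate \<beta> r)"
proof -
  have "pr c d (wa @ z) = pr c d (z @ wa)" using ce_pr[OF comm nE] .
  then have "pr c d wa @ pr c d z = pr c d z @ pr c d wa" by simp
  then show ?thesis by (rule LS)
qed

lemma comm_cross:
  assumes comm: "wa @ z \<approx> z @ wa" and nE: "\<not> E c d"
  shows "cnt c z * cnt d wa = cnt d z * cnt c wa"
proof -
  obtain r \<alpha> \<beta> where r: "pr c d wa = concat (replicate \<alpha> r)" "pr c d z = concat (replicate \<beta> r)"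
    using comm_key[OF comm nE] by blast
  have "cnt c wa = \<alpha> * cnt c r" "cnt c z = \<beta> * cnt c r"
       "cnt d wa = \<alpha> * cnt d r" "cnt d z = \<beta> * cnt d r"
    using cnt_pr[of c c d] cnt_pr[of d c d] r cnt_concat by metis+
  then show ?thesis by (simp add: algebra_simps)
qed

lemma comm_power:
  assumes comm: "wa @ z \<approx> z @ wa" and x: "x \<in> fst ` set wa" and y: "y \<in> fst ` set wa"
    and nxy: "\<not> E x y" and far: "\<forall>s. \<not> (E x s \<and> E s y)"
  shows "pw (cnt x z) wa \<approx> pw (cnt x wa) z"
proof -
  define p where "p = cnt x z"
  define q where "q = cnt x wa"
  have qpos: "0 < q" unfolding q_def using x by (rule cnt_pos)
  have ypos: "0 < cnt y wa" using y by (rule cnt_pos)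
  have ii: "cnt s z * q = p * cnt s wa" for s
  proof (cases "E s x")
    case False
    then show ?thesis using comm_cross[OF comm False] unfolding p_def q_def by simp
  next
    case True
    then have nsy: "\<not> E s y" using far Esym by blast
    have 1: "cnt s z * cnt y wa = cnt y z * cnt s wa" using comm_cross[OF comm nsy] .
    have nyx: "\<not> E y x" using nxy Esym by blast
    have 2: "cnt y z * q = p * cnt y wa" using comm_cross[OF comm nyx] unfolding p_def q_def by simp
    have "(cnt s z * q) * cnt y wa = (cnt s z * cnt y wa) * q" by simp
    also have "\<dots> = cnt y z * q * cnt s wa" using 1 by simp
    also have "\<dots> = p * cnt y wa * cnt s wa" using 2 by simp
    also have "\<dots> = (p * cnt s wa) * cnt y wa" by simp
    finally show ?thesis using ypos by simp
  qed
  have "\<forall>c d. \<not> E c d \<longrightarrow> pr c d (pw p wa) = pr c d (pw q z)"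
  proof (intro allI impI)
    fix c d assume nE: "\<not> E c d"
    obtain r \<alpha> \<beta> where r: "pr c d wa = concat (replicate \<alpha> r)" "pr c d z = concat (replicate \<beta> r)"
      using comm_key[OF comm nE] by blast
    have L: "pr c d (pw p wa) = concat (replicate (p * \<alpha>) r)"
      unfolding pw_concat pr_concat r concat_mult ..
    have Rr: "pr c d (pw q z) = concat (replicate (q * \<beta>) r)"
      unfolding pw_concat pr_concat r concat_mult ..
    show "pr c d (pw p wa) = pr c d (pw q z)"
    proof (cases "p * \<alpha> = q * \<beta>")
      case True then show ?thesis using L Rr by simp
    next
      case False
      then have "0 < \<alpha> \<or> 0 < \<beta>" by auto
      then have "set r \<subseteq> set (pr c d wa) \<union> set (pr c d z)" using r by auto
      also have "\<dots> \<subseteq> {l. fst l = c \<or> fst l = d}" by (auto simp: pr_def)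
      finally have sr: "set r \<subseteq> {l. fst l = c \<or> fst l = d}" .
      show ?thesis
      proof (cases "r = []")
        case True then show ?thesis using L Rr by simp
      next
        case False
        then obtain l0 where l0: "l0 \<in> set r" by (cases r) auto
        define e where "e = fst l0"
        have ecd: "e = c \<or> e = d" using sr l0 unfolding e_def by auto
        have kpos: "0 < cnt e r" using l0 unfolding e_def by (intro cnt_pos) auto
        have "cnt e wa = \<alpha> * cnt e r" "cnt e z = \<beta> * cnt e r"
          using cnt_pr[OF ecd] r cnt_concat by metis+
        then have "\<beta> * cnt e r * q = p * (\<alpha> * cnt e r)" using ii[of e] by simp
        then have "(q * \<beta>) * cnt e r = (p * \<alpha>) * cnt e r" by (simp add: algebra_simps)
        then have "q * \<beta> = p * \<alpha>" using kpos by simp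
        then show ?thesis using \<open>p * \<alpha> \<noteq> q * \<beta>\<close> by simp
      qed
    qed
  qed
  then show ?thesis unfolding PL p_def q_def .
qed

definition cred :: "('v \<times> bool) list \<Rightarrow> bool" where
  "cred w \<longleftrightarrow> red w \<and> \<not> (\<exists>l m. w \<approx> l # m @ [linv l])"

lemma cred_pw: "cred w \<Longrightarrow> red (pw n w)"
proof (induction n)
  case 0 then show ?case by simp
next
  case (Suc n)
  have rw: "red w" using Suc.prems unfolding cred_def by blast
  show ?case
  proof (rule ccontr)
    assume nr: "\<not> red (pw (Suc n) w)"
    then have "\<not> red (pw n w @ w)" using pw_Suc2[of n w] by metis
    from red_app_split[OF Suc.IH[OF Suc.prems] rw this] obtain l u' v' where
      A: "pw n w \<approx> u' @ [l]" and B: "w \<approx> linv l # v'" by blast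
    have "n \<noteq> 0"
    proof
      assume "n = 0"
      then have "length (pw n w) = length (u' @ [l])" using ce_length[OF A] by simp
      then show False using \<open>n = 0\<close> by simp
    qed
    then obtain k where n: "n = Suc k" by (cases n) auto
    have "pw k w @ w \<approx> u' @ [l]" using A n pw_Suc2[of k w] by metis
    then have "rev w @ rev (pw k w) \<approx> l # rev u'" using ce_rev[symmetric] by fastforce
    moreover have "\<exists>m\<in>set (rev w). fst m = fst l"
      using ce_set[OF B] by (rule_tac x="linv l" in bexI) auto
    ultimately obtain A' where A': "rev w \<approx> l # A'" using front_app by blast
    then have wA: "w \<approx> rev A' @ [l]" using ce_rev[of w "rev A' @ [l]"] by simp
    have lw: "l \<in> set w" using ce_set[OF wA] by simp
    then have "l \<in> set v'" using ce_set[OF B] by auto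
    have "linv l # v' \<approx> rev A' @ [l]" using B wA ce_sym ce_trans by blast
    then have "rev v' @ [linv l] \<approx> l # A'" using ce_rev[symmetric] by fastforce
    moreover have "\<exists>m\<in>set (rev v'). fst m = fst l" using \<open>l \<in> set v'\<close> by auto
    ultimately obtain B' where "rev v' \<approx> l # B'" using front_app by blast
    then have "v' \<approx> rev B' @ [l]" using ce_rev[of v' "rev B' @ [l]"] by simp
    then have "w \<approx> linv l # rev B' @ [linv (linv l)]" using B ce_cons ce_trans by fastforce
    then show False using Suc.prems unfolding cred_def by blast
  qed
qed

end

context group
begin

lemma cancel_l1: "h \<in> carrier G \<Longrightarrow> z \<in> carrier G \<Longrightarrow> h \<otimes> (inv h \<otimes> z) = z"
  by (simp add: m_assoc[symmetric])

lemma cancel_l2: "h \<in> carrier G \<Longrightarrow> z \<in> carrier G \<Longrightarrow> inv h \<otimes> (h \<otimes> z) = z"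
  by (simp add: m_assoc[symmetric])

lemma conj_mult:
  "h \<in> carrier G \<Longrightarrow> x \<in> carrier G \<Longrightarrow> y \<in> carrier G \<Longrightarrow>
   (inv h \<otimes> x \<otimes> h) \<otimes> (inv h \<otimes> y \<otimes> h) = inv h \<otimes> (x \<otimes> y) \<otimes> h"
  by (simp add: m_assoc cancel_l1)

lemma conj_pow:
  "h \<in> carrier G \<Longrightarrow> x \<in> carrier G \<Longrightarrow> (inv h \<otimes> x \<otimes> h) [^] (n::nat) = inv h \<otimes> x [^] n \<otimes> h"
proof (induction n)
  case 0 then show ?case by (simp add: m_assoc)
next
  case (Suc n) then show ?case using conj_mult by simp
qed

lemma conj_cancel:
  "h \<in> carrier G \<Longrightarrow> x \<in> carrier G \<Longrightarrow> y \<in> carrier G \<Longrightarrow>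
   inv h \<otimes> x \<otimes> h = inv h \<otimes> y \<otimes> h \<Longrightarrow> x = y"
  by (simp add: m_assoc)

lemma conj_conj:
  "h1 \<in> carrier G \<Longrightarrow> h2 \<in> carrier G \<Longrightarrow> g \<in> carrier G \<Longrightarrow>
   inv (inv h1 \<otimes> h2) \<otimes> (inv h1 \<otimes> g \<otimes> h1) \<otimes> (inv h1 \<otimes> h2) = inv h2 \<otimes> g \<otimes> h2"
  by (simp add: m_assoc inv_mult_group cancel_l1)

lemma conj_closed: "h \<in> carrier G \<Longrightarrow> x \<in> carrier G \<Longrightarrow> inv h \<otimes> x \<otimes> h \<in> carrier G"
  by simp

end

context rg
begin

lemma cls_carrier_eq: "X \<in> carrier G \<Longrightarrow> w \<in> X \<Longrightarrow> X = cls w"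
  using carrier_cls cls_of_mem by metis

lemma centralizer:
  assumes wW: "w \<in> W" and cw: "cred w" and x: "x \<in> fst ` set w" and y: "y \<in> fst ` set w"
    and nxy: "\<not> E x y" and far: "\<forall>s. \<not> (E x s \<and> E s y)"
    and b: "b \<in> carrier G" and cm: "cls w \<otimes>\<^bsub>G\<^esub> b = b \<otimes>\<^bsub>G\<^esub> cls w"
  shows "\<exists>(p1::nat) (p2::nat) (q::nat). 0 < q \<and> cls w [^]\<^bsub>G\<^esub> p1 = b [^]\<^bsub>G\<^esub> q \<otimes>\<^bsub>G\<^esub> cls w [^]\<^bsub>G\<^esub> p2"
proof -
  define a where "a = cls w"
  have aC: "a \<in> carrier G" unfolding a_def using cls_carrier wW .
  have apow: "a [^]\<^bsub>G\<^esub> n = cls (pw n w)" for n :: nat unfolding a_def using pow_cls wW .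
  have lenpow: "len (a [^]\<^bsub>G\<^esub> n) = n * length w" for n :: nat
    using apow red_len[OF pw_words[OF wW] cred_pw[OF cw]] by simp
  define zs where "zs N = (SOME z. z \<in> b \<otimes>\<^bsub>G\<^esub> a [^]\<^bsub>G\<^esub> N \<and> red z \<and> length z = len (b \<otimes>\<^bsub>G\<^esub> a [^]\<^bsub>G\<^esub> N))" for N :: nat
  have bN: "b \<otimes>\<^bsub>G\<^esub> a [^]\<^bsub>G\<^esub> N \<in> carrier G" for N :: nat using b aC by simp
  have zs: "zs N \<in> b \<otimes>\<^bsub>G\<^esub> a [^]\<^bsub>G\<^esub> N \<and> red (zs N) \<and> length (zs N) = len (b \<otimes>\<^bsub>G\<^esub> a [^]\<^bsub>G\<^esub> N)" for N :: nat
    unfolding zs_def using red_rep[OF bN[of N]] by (rule_tac someI_ex) blast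
  have zcls: "b \<otimes>\<^bsub>G\<^esub> a [^]\<^bsub>G\<^esub> N = cls (zs N)" for N :: nat using cls_carrier_eq bN zs by blast
  have zW: "zs N \<in> W" for N :: nat using carrier_words bN zs by blast
  have "\<exists>N. red (zs N @ w)"
  proof (rule ccontr)
    assume nn: "\<not> (\<exists>N. red (zs N @ w))"
    have bound: "len (b \<otimes>\<^bsub>G\<^esub> a [^]\<^bsub>G\<^esub> N) + N \<le> len b + N * length w" for N :: nat
    proof (induction N)
      case 0 then show ?case using b by simp
    next
      case (Suc N)
      have "b \<otimes>\<^bsub>G\<^esub> a [^]\<^bsub>G\<^esub> Suc N = (b \<otimes>\<^bsub>G\<^esub> a [^]\<^bsub>G\<^esub> N) \<otimes>\<^bsub>G\<^esub> a"
        using b aC by (simp add: grp.m_assoc)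
      also have "\<dots> = cls (zs N @ w)" using zcls a_def mult_cls zW wW by simp
      finally have eq: "b \<otimes>\<^bsub>G\<^esub> a [^]\<^bsub>G\<^esub> Suc N = cls (zs N @ w)" .
      have "zs N @ w \<in> W" using zW wW by simp
      then have "len (cls (zs N @ w)) + 2 \<le> length (zs N @ w)"
        using nonred_len nn by blast
      then have "len (b \<otimes>\<^bsub>G\<^esub> a [^]\<^bsub>G\<^esub> Suc N) + 2 \<le> len (b \<otimes>\<^bsub>G\<^esub> a [^]\<^bsub>G\<^esub> N) + length w"
        using eq zs by simp
      then show ?case using Suc.IH by simp
    qed
    have lower: "N * length w \<le> len b + len (b \<otimes>\<^bsub>G\<^esub> a [^]\<^bsub>G\<^esub> N)" for N :: nat
    proof -
      have "a [^]\<^bsub>G\<^esub> N = inv\<^bsub>G\<^esub> b \<otimes>\<^bsub>G\<^esub> (b \<otimes>\<^bsub>G\<^esub> a [^]\<^bsub>G\<^esub> N)"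
        using b aC by (simp add: grp.cancel_l2)
      then have "len (a [^]\<^bsub>G\<^esub> N) \<le> len (inv\<^bsub>G\<^esub> b) + len (b \<otimes>\<^bsub>G\<^esub> a [^]\<^bsub>G\<^esub> N)"
        using len_mult[of "inv\<^bsub>G\<^esub> b" "b \<otimes>\<^bsub>G\<^esub> a [^]\<^bsub>G\<^esub> N"] b bN by simp
      then show ?thesis using len_inv[OF b] lenpow by simp
    qed
    define N :: nat where "N = 2 * len b + 1"
    have "N * length w + N \<le> 2 * len b + N * length w"
      using bound[of N] lower[of N] by simp
    then show False unfolding N_def by simp
  qed
  then obtain N :: nat where rN: "red (zs N @ w)" by blast
  define z where "z = zs N"
  have zc: "b \<otimes>\<^bsub>G\<^esub> a [^]\<^bsub>G\<^esub> N = cls z" unfolding z_def by (rule zcls)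
  have zW': "z \<in> W" unfolding z_def by (rule zW)
  have rz: "red z" unfolding z_def using zs by blast
  have ab: "a \<otimes>\<^bsub>G\<^esub> b = b \<otimes>\<^bsub>G\<^esub> a" using cm a_def by simp
  have comm1: "a \<otimes>\<^bsub>G\<^esub> cls z = cls z \<otimes>\<^bsub>G\<^esub> a"
  proof -
    have "a \<otimes>\<^bsub>G\<^esub> (b \<otimes>\<^bsub>G\<^esub> a [^]\<^bsub>G\<^esub> N) = (a \<otimes>\<^bsub>G\<^esub> b) \<otimes>\<^bsub>G\<^esub> a [^]\<^bsub>G\<^esub> N"
      using aC b by (simp add: grp.m_assoc)
    also have "\<dots> = b \<otimes>\<^bsub>G\<^esub> (a \<otimes>\<^bsub>G\<^esub> a [^]\<^bsub>G\<^esub> N)" using ab aC b by (simp add: grp.m_assoc)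
    also have "a \<otimes>\<^bsub>G\<^esub> a [^]\<^bsub>G\<^esub> N = a [^]\<^bsub>G\<^esub> N \<otimes>\<^bsub>G\<^esub> a"
      using aC grp.nat_pow_Suc2[of a N] by simp
    also have "b \<otimes>\<^bsub>G\<^esub> (a [^]\<^bsub>G\<^esub> N \<otimes>\<^bsub>G\<^esub> a) = (b \<otimes>\<^bsub>G\<^esub> a [^]\<^bsub>G\<^esub> N) \<otimes>\<^bsub>G\<^esub> a"
      using aC b by (simp add: grp.m_assoc)
    finally show ?thesis using zc by simp
  qed
  have c1: "cls (w @ z) = cls (z @ w)"
    using comm1 mult_cls wW zW' a_def by simp
  have rwz: "red (w @ z)"
  proof (rule ccontr)
    assume "\<not> red (w @ z)"
    then have "len (cls (w @ z)) + 2 \<le> length (w @ z)" using nonred_len[of "w @ z"] wW zW' by simp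
    moreover have "len (cls (z @ w)) = length (z @ w)"
      using red_len rN zW' wW unfolding z_def by simp
    ultimately show False using c1 by simp
  qed
  have "(w @ z, z @ w) \<in> R" using cls_eqD[OF c1] wW zW' by simp
  then have ce: "w @ z \<approx> z @ w" using word_problem rwz rN z_def by blast
  have pp: "pw (cnt x z) w \<approx> pw (cnt x w) z" by (rule comm_power[OF ce x y nxy far])
  define p where "p = cnt x z"
  define q where "q = cnt x w"
  have qpos: "0 < q" unfolding q_def using x by (rule cnt_pos)
  have "cls (pw p w) = cls (pw q z)"
    using cls_eq[OF ce_rel[OF pp]] wW unfolding p_def q_def by simp
  then have "a [^]\<^bsub>G\<^esub> p = cls z [^]\<^bsub>G\<^esub> q" using apow pow_cls zW' by simp
  also have "\<dots> = (b \<otimes>\<^bsub>G\<^esub> a [^]\<^bsub>G\<^esub> N) [^]\<^bsub>G\<^esub> q" using zc by simp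
  also have "\<dots> = b [^]\<^bsub>G\<^esub> q \<otimes>\<^bsub>G\<^esub> (a [^]\<^bsub>G\<^esub> N) [^]\<^bsub>G\<^esub> q"
  proof (rule grp.pow_mult_distrib)
    show "b \<otimes>\<^bsub>G\<^esub> a [^]\<^bsub>G\<^esub> N = a [^]\<^bsub>G\<^esub> N \<otimes>\<^bsub>G\<^esub> b"
      using grp.group_commutes_pow[OF ab aC b] by simp
  qed (use aC b in auto)
  also have "\<dots> = b [^]\<^bsub>G\<^esub> q \<otimes>\<^bsub>G\<^esub> a [^]\<^bsub>G\<^esub> (N * q)" using aC grp.nat_pow_pow by simp
  finally show ?thesis using qpos a_def by blast
qed

end

context rg
begin

lemma rel_inv:
  assumes st: "\<And>u v. (u, v) \<in> raag_step V E \<Longrightarrow> f u = f v" and uv: "(u, v) \<in> R"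
  shows "f u = f v"
proof -
  from uv consider "(u, v) \<in> Id_on W" | "(u, v) \<in> (raag_step V E \<union> (raag_step V E)\<inverse>)\<^sup>+"
    unfolding raag_rel_def by blast
  then show ?thesis
  proof cases
    case 1 then show ?thesis by (auto simp: Id_on_iff)
  next
    case 2 then show ?thesis
    proof (induction rule: trancl_induct)
      case (base v)
      then show ?case using st by (metis UnE converseD)
    next
      case (step v w)
      then have "f v = f w" using st by (metis UnE converseD)
      then show ?case using step.IH by simp
    qed
  qed
qed

definition rho :: "'v \<Rightarrow> ('v \<times> bool) list \<Rightarrow> ('v \<times> bool) list" where
  "rho v w = filter (\<lambda>l. fst l \<noteq> v) w"

lemma rho_simps[simp]: "rho v [] = []" "rho v (u @ w) = rho v u @ rho v w"
  "rho v (l # w) = (if fst l = v then rho v w else l # rho v w)"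
  by (simp_all add: rho_def)

lemma rho_words: "w \<in> W \<Longrightarrow> rho v w \<in> W"
  by (induction w) auto

lemma rho_winv: "rho v (winv w) = winv (rho v w)"
  by (induction w) auto

lemma rho_pw: "rho v (pw n w) = pw n (rho v w)"
  by (induction n) auto

lemma rho_id: "v \<notin> fst ` set w \<Longrightarrow> rho v w = w"
  by (induction w) auto

lemma rho_step: "(u, u') \<in> raag_step V E \<Longrightarrow> (rho v u, rho v u') \<in> R"
proof -
  assume st: "(u, u') \<in> raag_step V E"
  then have uW: "u' \<in> W" using step_words by blast
  from st show ?thesis
  proof (cases rule: step_cases)
    case (c xs ys a s)
    show ?thesis
    proof (cases "a = v")
      case True
      then show ?thesis using c rel_refl rho_words uW by simp
    next
      case False
      have "rho v xs @ [(a, s), (a, \<not> s)] @ rho v ys \<in> W" using c rho_words by simp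
      then have "(rho v xs @ [(a, s), (a, \<not> s)] @ rho v ys, rho v xs @ rho v ys) \<in> R"
        by (intro step_rel step_c)
      then show ?thesis using c False by simp
    qed
  next
    case (s xs ys a s c t)
    show ?thesis
    proof (cases "a = v \<or> c = v")
      case True
      then show ?thesis using s rel_refl rho_words uW by auto
    next
      case False
      have "rho v xs @ [(a, s), (c, t)] @ rho v ys \<in> W" using s rho_words by simp
      then have "(rho v xs @ [(a, s), (c, t)] @ rho v ys, rho v xs @ [(c, t), (a, s)] @ rho v ys) \<in> R"
        using s(3) by (intro step_rel step_s)
      then show ?thesis using s False by simp
    qed
  qed
qed

lemma rho_rel: "(u, u') \<in> R \<Longrightarrow> (rho v u, rho v u') \<in> R"
proof -
  assume uv: "(u, u') \<in> R"
  from uv consider "(u, u') \<in> Id_on W" | "(u, u') \<in> (raag_step V E \<union> (raag_step V E)\<inverse>)\<^sup>+"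
    unfolding raag_rel_def by blast
  then show ?thesis
  proof cases
    case 1 then show ?thesis using rel_refl rho_words by (auto simp: Id_on_iff)
  next
    case 2 then show ?thesis
    proof (induction rule: trancl_induct)
      case (base y)
      then show ?case using rho_step rel_sym by (metis UnE converseD)
    next
      case (step y z)
      then have "(rho v y, rho v z) \<in> R" using rho_step rel_sym by (metis UnE converseD)
      then show ?case using rel_trans[OF step.IH] by blast
    qed
  qed
qed

lemma supp_transfer:
  assumes w1W: "w1 \<in> W" and w2W: "w2 \<in> W" and c1: "cred w1" and c2: "cred w2"
    and eql: "length w1 = length w2" and cW: "c \<in> W"
    and rel: "(winv c @ w1 @ c, w2) \<in> R" and v: "v \<in> fst ` set w2"
  shows "v \<in> fst ` set w1"
proof (rule ccontr)
  assume nv: "v \<notin> fst ` set w1"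
  define N :: nat where "N = 2 * length c + 1"
  have kC: "cls c \<in> carrier G" using cls_carrier cW .
  have a1C: "cls w1 \<in> carrier G" using cls_carrier w1W .
  have "cls w2 = cls (winv c @ w1 @ c)" using cls_eq[OF rel] by simp
  also have "\<dots> = inv\<^bsub>G\<^esub> (cls c) \<otimes>\<^bsub>G\<^esub> cls w1 \<otimes>\<^bsub>G\<^esub> cls c"
    using mult_cls inv_cls cW w1W by simp
  finally have "cls w2 [^]\<^bsub>G\<^esub> N = inv\<^bsub>G\<^esub> (cls c) \<otimes>\<^bsub>G\<^esub> cls w1 [^]\<^bsub>G\<^esub> N \<otimes>\<^bsub>G\<^esub> cls c"
    using grp.conj_pow[OF kC a1C] by simp
  then have "cls (pw N w2) = cls (winv c @ pw N w1 @ c)"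
    using pow_cls mult_cls inv_cls cW w1W w2W by simp
  then have P: "(pw N w2, winv c @ pw N w1 @ c) \<in> R" using cls_eqD w2W by simp
  define d where "d = rho v c"
  define X where "X = rho v (pw N w2)"
  have dW: "d \<in> W" unfolding d_def using rho_words cW .
  have "rho v (pw N w1) = pw N w1" using nv rho_id rho_pw by simp
  then have "(X, winv d @ pw N w1 @ d) \<in> R"
    using rho_rel[OF P, of v] unfolding X_def d_def by (simp add: rho_winv)
  then have Q: "(winv d @ pw N w1 @ d, X) \<in> R" by (rule rel_sym)
  have "(d @ (winv d @ pw N w1 @ d) @ winv d, d @ X @ winv d) \<in> R"
    using rel_app1[OF Q dW] dW by simp
  moreover have "(d @ winv d @ (pw N w1 @ d @ winv d), [] @ (pw N w1 @ []) ) \<in> R"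
  proof -
    have A: "(d @ winv d, []) \<in> R" using winv_rel[OF dW] by (rule conjunct1)
    have B: "(pw N w1 @ d @ winv d, pw N w1 @ []) \<in> R"
      using rel_app[OF rel_refl[OF pw_words[OF w1W]] A] .
    show ?thesis using rel_app[OF A B] by simp
  qed
  ultimately have "(d @ X @ winv d, pw N w1) \<in> R" using rel_sym rel_trans by (metis append_Nil append_Nil2 append_assoc)
  then have "(pw N w1, d @ X @ winv d) \<in> R" by (rule rel_sym)
  then have "d @ X @ winv d \<in> cls (pw N w1)" unfolding cls_mem .
  then have "len (cls (pw N w1)) \<le> length (d @ X @ winv d)" by (rule len_le)
  moreover have "len (cls (pw N w1)) = N * length w1"
    using red_len[OF pw_words[OF w1W] cred_pw[OF c1]] by simp
  moreover have "length d \<le> length c" unfolding d_def rho_def by simp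
  moreover have "length (rho v w2) < length w2"
  proof -
    obtain l0 where "l0 \<in> set w2" "v = fst l0" using v by blast
    then show ?thesis unfolding rho_def by (intro length_filter_less[of l0]) auto
  qed
  moreover have "length X = N * length (rho v w2)" unfolding X_def rho_pw by simp
  ultimately have A: "N * length w1 \<le> 2 * length c + N * length (rho v w2)"
    and lt: "length (rho v w2) + 1 \<le> length w1" using eql by simp_all
  have "N * (length (rho v w2) + 1) \<le> N * length w1" using lt by (rule mult_le_mono2)
  with A have "N \<le> 2 * length c" by (simp add: algebra_simps)
  then show False unfolding N_def by simp
qed

definition ex :: "'v \<Rightarrow> ('v \<times> bool) list \<Rightarrow> int" where
  "ex c w = sum_list (map (\<lambda>l. if fst l = c then (if snd l then 1 else -1) else 0) w)"

lemma ex_simps[simp]: "ex c [] = 0" "ex c (u @ w) = ex c u + ex c w"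
  "ex c (l # w) = (if fst l = c then (if snd l then 1 else -1) else 0) + ex c w"
  by (simp_all add: ex_def)

lemma ex_step: "(u, u') \<in> raag_step V E \<Longrightarrow> ex c u = ex c u'"
  by (erule step_cases) auto

lemma ex_rel: "(u, u') \<in> R \<Longrightarrow> ex c u = ex c u'"
  by (rule rel_inv[of "ex c"]) (rule ex_step)

lemma ex_pw: "ex c (pw n [(d, True)]) = (if d = c then int n else 0)"
  by (induction n) auto

end

context group
begin

lemma conj_comp:
  "h \<in> carrier G \<Longrightarrow> k \<in> carrier G \<Longrightarrow> g \<in> carrier G \<Longrightarrow>
   inv (h \<otimes> k) \<otimes> g \<otimes> (h \<otimes> k) = inv k \<otimes> (inv h \<otimes> g \<otimes> h) \<otimes> k"
  by (simp add: m_assoc inv_mult_group)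

end

context rg
begin

lemma minC:
  assumes g: "g \<in> carrier G" and h: "h \<in> carrier G" and w: "w \<in> inv\<^bsub>G\<^esub> h \<otimes>\<^bsub>G\<^esub> g \<otimes>\<^bsub>G\<^esub> h"
    and min: "\<forall>w'\<in>{w. \<exists>h\<in>carrier G. w \<in> inv\<^bsub>G\<^esub> h \<otimes>\<^bsub>G\<^esub> g \<otimes>\<^bsub>G\<^esub> h}. length w \<le> length w'"
  shows "w \<in> W \<and> cred w"
proof -
  define X where "X = inv\<^bsub>G\<^esub> h \<otimes>\<^bsub>G\<^esub> g \<otimes>\<^bsub>G\<^esub> h"
  have XC: "X \<in> carrier G" unfolding X_def using g h by simp
  have wX: "w \<in> X" using w X_def by simp
  have wW: "w \<in> W" using carrier_words XC wX .
  have Xw: "X = cls w" using cls_carrier_eq XC wX .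
  have rw: "red w"
  proof (rule ccontr)
    assume "\<not> red w"
    then obtain w' where w': "(w, w') \<in> R" "length w' + 2 = length w" using nonred_shorter wW by blast
    have "w' \<in> X" using w'(1) Xw cls_mem by simp
    then have "length w \<le> length w'" using min h unfolding X_def by blast
    then show False using w'(2) by simp
  qed
  have nc: "\<not> (\<exists>l m. w \<approx> l # m @ [linv l])"
  proof
    assume "\<exists>l m. w \<approx> l # m @ [linv l]"
    then obtain l m where lm: "w \<approx> l # m @ [linv l]" by blast
    have r1: "(w, l # m @ [linv l]) \<in> R" using ce_rel lm wW by blast
    have "l \<in> set w" using ce_set[OF lm] by simp
    then have lV: "fst l \<in> V" using wW words_iff by blast
    have mW: "m \<in> W" using r1 rel_words by (metis words_app words_cons)
    have lW: "[l] \<in> W" "[linv l] \<in> W" using lV by auto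
    define k where "k = cls [l]"
    have kC: "k \<in> carrier G" unfolding k_def using cls_carrier lW by blast
    have hk: "h \<otimes>\<^bsub>G\<^esub> k \<in> carrier G" using h kC by simp
    have "inv\<^bsub>G\<^esub> (h \<otimes>\<^bsub>G\<^esub> k) \<otimes>\<^bsub>G\<^esub> g \<otimes>\<^bsub>G\<^esub> (h \<otimes>\<^bsub>G\<^esub> k) = inv\<^bsub>G\<^esub> k \<otimes>\<^bsub>G\<^esub> X \<otimes>\<^bsub>G\<^esub> k"
      unfolding X_def using grp.conj_comp h kC g by simp
    also have "\<dots> = cls ([linv l] @ (l # m @ [linv l]) @ [l])"
      unfolding k_def using Xw cls_eq[OF r1] inv_cls mult_cls lW mW lV by simp
    also have "\<dots> = cls m"
    proof (rule cls_eq)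
      have A: "([linv l, l], []) \<in> R" using cancel_rel[of "linv l"] lV by simp
      have B: "(m @ [linv l, l], m @ []) \<in> R" using rel_app[OF rel_refl[OF mW] A] .
      show "([linv l] @ (l # m @ [linv l]) @ [l], m) \<in> R" using rel_app[OF A B] by simp
    qed
    finally have "m \<in> inv\<^bsub>G\<^esub> (h \<otimes>\<^bsub>G\<^esub> k) \<otimes>\<^bsub>G\<^esub> g \<otimes>\<^bsub>G\<^esub> (h \<otimes>\<^bsub>G\<^esub> k)" using cls_self mW by simp
    then have "length w \<le> length m" using min hk by blast
    then show False using ce_length[OF lm] by simp
  qed
  show ?thesis using wW rw nc unfolding cred_def by blast
qed

end

theorem lemma7p1:
  fixes V :: "'v set" and E :: "'v \<Rightarrow> 'v \<Rightarrow> bool" and v1 v2 :: 'v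
    and f :: "('v \<times> bool) list set \<Rightarrow> ('v \<times> bool) list set"
  assumes "simple_graph V E" and "no_isolated V E"
    and "v1 \<in> V" and "v2 \<in> V" and "dist_ge_3 E v1 v2"
    and "f \<in> iso (raag V E) (raag V E)"
    and "v1 \<in> esupp V E (f (raag_gen V E v1))"
  shows "v2 \<notin> esupp V E (f (raag_gen V E v1))"
proof
  assume v2e: "v2 \<in> esupp V E (f (raag_gen V E v1))"
  interpret rg E V
    using assms(1) unfolding simple_graph_def by unfold_locales blast+
  have fhom: "f \<in> hom (raag V E) (raag V E)" and fbij: "bij_betw f (carrier (raag V E)) (carrier (raag V E))"
    using assms(6) unfolding iso_def by blast+
  have finj: "inj_on f (carrier (raag V E))" using fbij bij_betw_imp_inj_on by blast
  define G1 where "G1 = cls [(v1, True)]"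
  have G1d: "raag_gen V E v1 = G1" unfolding G1_def raag_gen_def cls_def ..
  have v1W: "[(v1, True)] \<in> W" using assms(3) by simp
  have G1C: "G1 \<in> carrier (raag V E)" unfolding G1_def using cls_carrier v1W .
  define g where "g = f G1"
  have gC: "g \<in> carrier (raag V E)" unfolding g_def using hom_in_carrier[OF fhom G1C] .
  define C where "C = {w. \<exists>h\<in>carrier (raag V E). w \<in> inv\<^bsub>raag V E\<^esub> h \<otimes>\<^bsub>raag V E\<^esub> g \<otimes>\<^bsub>raag V E\<^esub> h}"
  have es: "esupp V E g = {v. \<exists>w\<in>C. (\<forall>w'\<in>C. length w \<le> length w') \<and> v \<in> fst ` set w}"
    unfolding esupp_def C_def Let_def ..
  obtain w1 where w1C: "w1 \<in> C" and min1: "\<forall>w'\<in>C. length w1 \<le> length w'" and v1w: "v1 \<in> fst ` set w1"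
    using assms(7) es unfolding G1d g_def by blast
  obtain w2 where w2C: "w2 \<in> C" and min2: "\<forall>w'\<in>C. length w2 \<le> length w'" and v2w: "v2 \<in> fst ` set w2"
    using v2e es unfolding G1d g_def by blast
  obtain h1 where h1: "h1 \<in> carrier (raag V E)" "w1 \<in> inv\<^bsub>raag V E\<^esub> h1 \<otimes>\<^bsub>raag V E\<^esub> g \<otimes>\<^bsub>raag V E\<^esub> h1"
    using w1C unfolding C_def by blast
  obtain h2 where h2: "h2 \<in> carrier (raag V E)" "w2 \<in> inv\<^bsub>raag V E\<^esub> h2 \<otimes>\<^bsub>raag V E\<^esub> g \<otimes>\<^bsub>raag V E\<^esub> h2"
    using w2C unfolding C_def by blast
  have c1: "w1 \<in> W \<and> cred w1" using minC[OF gC h1(1) h1(2)] min1 unfolding C_def by blast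
  have c2: "w2 \<in> W \<and> cred w2" using minC[OF gC h2(1) h2(2)] min2 unfolding C_def by blast
  have eql: "length w1 = length w2" using min1 min2 w1C w2C by (meson le_antisym)
  define k where "k = inv\<^bsub>raag V E\<^esub> h1 \<otimes>\<^bsub>raag V E\<^esub> h2"
  have kC: "k \<in> carrier (raag V E)" unfolding k_def using h1 h2 by simp
  obtain c where cW: "c \<in> W" and kc: "k = cls c" using carrier_cls kC by blast
  have a1: "inv\<^bsub>raag V E\<^esub> h1 \<otimes>\<^bsub>raag V E\<^esub> g \<otimes>\<^bsub>raag V E\<^esub> h1 = cls w1"
    using cls_carrier_eq h1 gC by simp
  have a2: "inv\<^bsub>raag V E\<^esub> h2 \<otimes>\<^bsub>raag V E\<^esub> g \<otimes>\<^bsub>raag V E\<^esub> h2 = cls w2"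
    using cls_carrier_eq h2 gC by simp
  have "cls (winv c @ w1 @ c) = inv\<^bsub>raag V E\<^esub> k \<otimes>\<^bsub>raag V E\<^esub> cls w1 \<otimes>\<^bsub>raag V E\<^esub> k"
    using kc mult_cls inv_cls cW c1 by simp
  also have "\<dots> = cls w2" unfolding k_def using grp.conj_conj[OF h1(1) h2(1) gC] a1 a2 by simp
  finally have "(winv c @ w1 @ c, w2) \<in> R" using cls_eqD cW c1 by simp
  then have v2w1: "v2 \<in> fst ` set w1"
    using supp_transfer c1 c2 eql cW v2w by blast
  obtain u where vu: "E v1 u" using assms(2,3) unfolding no_isolated_def by blast
  have uV: "u \<in> V" using EV vu by blast
  have uW: "[(u, True)] \<in> W" using uV by simp
  define Gu where "Gu = cls [(u, True)]"
  have GuC: "Gu \<in> carrier (raag V E)" unfolding Gu_def using cls_carrier uW .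
  have "([] @ [(v1, True), (u, True)] @ [], [] @ [(u, True), (v1, True)] @ []) \<in> raag_step V E"
    using vu v1W uW by (intro step_c step_s) simp_all
  then have "cls [(v1, True), (u, True)] = cls [(u, True), (v1, True)]" using cls_eq step_rel by simp
  then have Gc: "G1 \<otimes>\<^bsub>raag V E\<^esub> Gu = Gu \<otimes>\<^bsub>raag V E\<^esub> G1"
    unfolding G1_def Gu_def using mult_cls v1W uW by simp
  define fu where "fu = f Gu"
  have fuC: "fu \<in> carrier (raag V E)" unfolding fu_def using hom_in_carrier[OF fhom GuC] .
  have fc: "g \<otimes>\<^bsub>raag V E\<^esub> fu = fu \<otimes>\<^bsub>raag V E\<^esub> g"
    unfolding g_def fu_def using hom_mult[OF fhom] G1C GuC Gc by metis
  define a where "a = cls w1"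
  define b where "b = inv\<^bsub>raag V E\<^esub> h1 \<otimes>\<^bsub>raag V E\<^esub> fu \<otimes>\<^bsub>raag V E\<^esub> h1"
  have bC: "b \<in> carrier (raag V E)" unfolding b_def using h1 fuC by simp
  have ab: "cls w1 \<otimes>\<^bsub>raag V E\<^esub> b = b \<otimes>\<^bsub>raag V E\<^esub> cls w1"
    unfolding b_def a1[symmetric] using grp.conj_mult h1(1) gC fuC fc by simp
  have d3: "\<not> E v1 v2" "\<forall>s. \<not> (E v1 s \<and> E s v2)" using assms(5) unfolding dist_ge_3_def by blast+
  obtain p1 p2 q :: nat where q: "0 < q" and pe: "cls w1 [^]\<^bsub>raag V E\<^esub> p1 = b [^]\<^bsub>raag V E\<^esub> q \<otimes>\<^bsub>raag V E\<^esub> cls w1 [^]\<^bsub>raag V E\<^esub> p2"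
    using centralizer[OF conjunct1[OF c1] conjunct2[OF c1] v1w v2w1 d3(1) d3(2) bC ab] by blast
  have "inv\<^bsub>raag V E\<^esub> h1 \<otimes>\<^bsub>raag V E\<^esub> g [^]\<^bsub>raag V E\<^esub> p1 \<otimes>\<^bsub>raag V E\<^esub> h1
      = inv\<^bsub>raag V E\<^esub> h1 \<otimes>\<^bsub>raag V E\<^esub> (fu [^]\<^bsub>raag V E\<^esub> q \<otimes>\<^bsub>raag V E\<^esub> g [^]\<^bsub>raag V E\<^esub> p2) \<otimes>\<^bsub>raag V E\<^esub> h1"
    using pe unfolding a1[symmetric] b_def
    using grp.conj_pow[OF h1(1) gC] grp.conj_pow[OF h1(1) fuC] grp.conj_mult[OF h1(1)] gC fuC by simp
  then have "g [^]\<^bsub>raag V E\<^esub> p1 = fu [^]\<^bsub>raag V E\<^esub> q \<otimes>\<^bsub>raag V E\<^esub> g [^]\<^bsub>raag V E\<^esub> p2"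
    using grp.conj_cancel[OF h1(1)] gC fuC by simp
  then have "f (G1 [^]\<^bsub>raag V E\<^esub> p1) = f (Gu [^]\<^bsub>raag V E\<^esub> q \<otimes>\<^bsub>raag V E\<^esub> G1 [^]\<^bsub>raag V E\<^esub> p2)"
    unfolding g_def fu_def using hom_nat_pow[OF fhom _ group_G group_G] hom_mult[OF fhom] G1C GuC by simp
  then have "G1 [^]\<^bsub>raag V E\<^esub> p1 = Gu [^]\<^bsub>raag V E\<^esub> q \<otimes>\<^bsub>raag V E\<^esub> G1 [^]\<^bsub>raag V E\<^esub> p2"
    using finj G1C GuC unfolding inj_on_def by simp
  then have "cls (pw p1 [(v1, True)]) = cls (pw q [(u, True)] @ pw p2 [(v1, True)])"
    unfolding G1_def Gu_def using pow_cls mult_cls v1W uW by simp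
  then have "(pw p1 [(v1, True)], pw q [(u, True)] @ pw p2 [(v1, True)]) \<in> R"
    using cls_eqD v1W by simp
  then have "ex u (pw p1 [(v1, True)]) = ex u (pw q [(u, True)] @ pw p2 [(v1, True)])"
    by (rule ex_rel)
  moreover have "v1 \<noteq> u" using vu Eirr by blast
  ultimately show False using ex_pw q by simp
qed


end
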